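(* Let $G\in\mathcal{C}$, let $H$ be a hole of $G$, and let $P=u\text{-}\cdots\text{-}v$ be a path of length at least $1$, vertex-disjoint from $H$, such that $u$ and $v$ both have neighbors in $H$, $u$ and $v$ are nested with respect to $H$, and no internal vertex of $P$ has a neighbor in $H$. Then either $u$ and $v$ have a common neighbor in $H$, or $u$ and $v$ are both pendants of $H$ whose (unique) neighbors in $H$ are adjacent. In particular, if $u$ and $v$ are strictly nested with respect to $H$, then $u$ and $v$ are both pendants of $H$ with adjacent neighbors in $H$.
   Context: All graphs are finite and simple; paths are induced paths; a hole is an induced cycle of length at least four. $\mathcal{C}$ is the class of graphs containing no theta, pyramid, prism or turtle as an induced subgraph, where: a theta consists of two nonadjacent vertices $a,b$ and three paths from $a$ to $b$, otherwise vertex-disjoint, any two of which induce a hole; a pyramid consists of a vertex $a$, a triangle $\{b_1,b_2,b_3\}$ and paths $P_i$ from $a$ to $b_i$, pairwise disjoint except at $a$, any two of which induce a hole; a prism consists of two disjoint triangles $\{a_1,a_2,a_3\},\{b_1,b_2,b_3\}$ and pairwise disjoint paths $P_i$ from $a_i$ to $b_i$, any two of which induce a hole; a turtle consists of disjoint paths $P_1$ (from $a_1$ to $b_1$), $P_2$ (from $a_2$ to $b_2$) with $a_1a_2,b_1b_2$ edges and $V(P_1)\cup V(P_2)$ inducing a hole, plus adjacent vertices $x,y$ where $x$ has at least three neighbors in $P_1$ and none in $P_2$, and $y$ has at least three neighbors in $P_2$ and none in $P_1$. For a hole $H$ and $u\notin V(H)$, $N_H(u)$ is the set of neighbors of $u$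 in $H$; $u$ is a pendant of $H$ if $|N_H(u)|=1$. Two vertices $u,v\notin V(H)$ are nested with respect to $H$ if there exist distinct $a,b\in V(H)$ such that one of the two $a$–$b$ paths of $H$ contains all neighbors of $u$ in $H$ and the other contains all neighbors of $v$ in $H$; they are strictly nested if they are nested and $N_H(u)\cap N_H(v)=\emptyset$. *)

theory Defs
  imports Main
begin

definition graph :: "'a set \<Rightarrow> ('a \<Rightarrow> 'a \<Rightarrow> bool) \<Rightarrow> bool" where
  "graph V E \<longleftrightarrow> finite V \<and> (\<forall>x y. E x y \<longrightarrow> x \<in> V \<and> y \<in> V)
     \<and> (\<forall>x y. E x y \<longrightarrow> E y x) \<and> (\<forall>x. \<not> E x x)"

definition is_path :: "'a set \<Rightarrow> ('a \<Rightarrow> 'a \<Rightarrow> bool) \<Rightarrow> 'a list \<Rightarrow> bool" where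
  "is_path V E p \<longleftrightarrow> p \<noteq> [] \<and> distinct p \<and> set p \<subseteq> V \<and>
     (\<forall>i j. i < length p \<and> j < length p \<longrightarrow> (E (p!i) (p!j) \<longleftrightarrow> (i = j + 1 \<or> j = i + 1)))"

definition is_hole :: "'a set \<Rightarrow> ('a \<Rightarrow> 'a \<Rightarrow> bool) \<Rightarrow> 'a list \<Rightarrow> bool" where
  "is_hole V E cs \<longleftrightarrow> length cs \<ge> 4 \<and> distinct cs \<and> set cs \<subseteq> V \<and>
     (\<forall>i j. i < length cs \<and> j < length cs \<longrightarrow>
        (E (cs!i) (cs!j) \<longleftrightarrow> (j = (i + 1) mod length cs \<or> i = (j + 1) mod length cs)))"

definition hole_set :: "'a set \<Rightarrow> ('a \<Rightarrow> 'a \<Rightarrow> bool) \<Rightarrow> 'a set \<Rightarrow> bool" where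
  "hole_set V E S \<longleftrightarrow> (\<exists>cs. is_hole V E cs \<and> set cs = S)"

definition path_from_to :: "'a set \<Rightarrow> ('a \<Rightarrow> 'a \<Rightarrow> bool) \<Rightarrow> 'a list \<Rightarrow> 'a \<Rightarrow> 'a \<Rightarrow> bool" where
  "path_from_to V E p a b \<longleftrightarrow> is_path V E p \<and> hd p = a \<and> last p = b"

definition nbrs :: "('a \<Rightarrow> 'a \<Rightarrow> bool) \<Rightarrow> 'a set \<Rightarrow> 'a \<Rightarrow> 'a set" where
  "nbrs E S u = {w \<in> S. E u w}"

definition has_theta :: "'a set \<Rightarrow> ('a \<Rightarrow> 'a \<Rightarrow> bool) \<Rightarrow> bool" where
  "has_theta V E \<longleftrightarrow> (\<exists>a b P1 P2 P3. a \<noteq> b \<and> \<not> E a b \<and>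
     path_from_to V E P1 a b \<and> path_from_to V E P2 a b \<and> path_from_to V E P3 a b \<and>
     set P1 \<inter> set P2 = {a, b} \<and> set P1 \<inter> set P3 = {a, b} \<and> set P2 \<inter> set P3 = {a, b} \<and>
     hole_set V E (set P1 \<union> set P2) \<and> hole_set V E (set P1 \<union> set P3) \<and>
     hole_set V E (set P2 \<union> set P3))"

definition has_pyramid :: "'a set \<Rightarrow> ('a \<Rightarrow> 'a \<Rightarrow> bool) \<Rightarrow> bool" where
  "has_pyramid V E \<longleftrightarrow> (\<exists>a b1 b2 b3 P1 P2 P3. E b1 b2 \<and> E b1 b3 \<and> E b2 b3 \<and>
     path_from_to V E P1 a b1 \<and> path_from_to V E P2 a b2 \<and> path_from_to V E P3 a b3 \<and>
     set P1 \<inter> set P2 = {a} \<and> set P1 \<inter> set P3 = {a} \<and> set P2 \<inter> set P3 = {a} \<and>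
     hole_set V E (set P1 \<union> set P2) \<and> hole_set V E (set P1 \<union> set P3) \<and>
     hole_set V E (set P2 \<union> set P3))"

definition has_prism :: "'a set \<Rightarrow> ('a \<Rightarrow> 'a \<Rightarrow> bool) \<Rightarrow> bool" where
  "has_prism V E \<longleftrightarrow> (\<exists>a1 a2 a3 b1 b2 b3 P1 P2 P3.
     E a1 a2 \<and> E a1 a3 \<and> E a2 a3 \<and> E b1 b2 \<and> E b1 b3 \<and> E b2 b3 \<and>
     {a1, a2, a3} \<inter> {b1, b2, b3} = {} \<and>
     path_from_to V E P1 a1 b1 \<and> path_from_to V E P2 a2 b2 \<and> path_from_to V E P3 a3 b3 \<and>
     set P1 \<inter> set P2 = {} \<and> set P1 \<inter> set P3 = {} \<and> set P2 \<inter> set P3 = {} \<and>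
     hole_set V E (set P1 \<union> set P2) \<and> hole_set V E (set P1 \<union> set P3) \<and>
     hole_set V E (set P2 \<union> set P3))"

definition has_turtle :: "'a set \<Rightarrow> ('a \<Rightarrow> 'a \<Rightarrow> bool) \<Rightarrow> bool" where
  "has_turtle V E \<longleftrightarrow> (\<exists>a1 b1 a2 b2 P1 P2 x y.
     path_from_to V E P1 a1 b1 \<and> path_from_to V E P2 a2 b2 \<and> set P1 \<inter> set P2 = {} \<and>
     E a1 a2 \<and> E b1 b2 \<and> hole_set V E (set P1 \<union> set P2) \<and>
     E x y \<and> x \<notin> set P1 \<union> set P2 \<and> y \<notin> set P1 \<union> set P2 \<and>
     card (nbrs E (set P1) x) \<ge> 3 \<and> nbrs E (set P2) x = {} \<and>
     card (nbrs E (set P2) y) \<ge> 3 \<and> nbrs E (set P1) y = {})"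

definition in_C :: "'a set \<Rightarrow> ('a \<Rightarrow> 'a \<Rightarrow> bool) \<Rightarrow> bool" where
  "in_C V E \<longleftrightarrow> graph V E \<and> \<not> has_theta V E \<and> \<not> has_pyramid V E \<and>
     \<not> has_prism V E \<and> \<not> has_turtle V E"

text \<open>Vertex set of the path of hole cs going forward from position i to position j
  (both ends included).\<close>
definition arc :: "'a list \<Rightarrow> nat \<Rightarrow> nat \<Rightarrow> 'a set" where
  "arc cs i j = {cs ! ((i + k) mod length cs) | k. k \<le> (j + length cs - i) mod length cs}"

definition nested :: "('a \<Rightarrow> 'a \<Rightarrow> bool) \<Rightarrow> 'a list \<Rightarrow> 'a \<Rightarrow> 'a \<Rightarrow> bool" where
  "nested E cs u v \<longleftrightarrow> u \<notin> set cs \<and> v \<notin> set cs \<and>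
     (\<exists>i j. i < length cs \<and> j < length cs \<and> i \<noteq> j \<and>
        nbrs E (set cs) u \<subseteq> arc cs i j \<and> nbrs E (set cs) v \<subseteq> arc cs j i)"

definition strictly_nested :: "('a \<Rightarrow> 'a \<Rightarrow> bool) \<Rightarrow> 'a list \<Rightarrow> 'a \<Rightarrow> 'a \<Rightarrow> bool" where
  "strictly_nested E cs u v \<longleftrightarrow> nested E cs u v \<and> nbrs E (set cs) u \<inter> nbrs E (set cs) v = {}"

definition pendant :: "('a \<Rightarrow> 'a \<Rightarrow> bool) \<Rightarrow> 'a list \<Rightarrow> 'a \<Rightarrow> bool" where
  "pendant E cs u \<longleftrightarrow> u \<notin> set cs \<and> card (nbrs E (set cs) u) = 1"

end

theory Submission
  imports Defs
begin



definition seg :: "'a list \<Rightarrow> nat \<Rightarrow> nat \<Rightarrow> 'a list" where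
  "seg C a b = map ((!) C) [a..<Suc b]"

lemma seg_length[simp]: "length (seg C a b) = Suc b - a"
  by (simp add: seg_def del: upt_Suc)

lemma seg_nth[simp]: "t < Suc b - a \<Longrightarrow> seg C a b ! t = C ! (a + t)"
  by (simp add: seg_def del: upt_Suc)

lemma seg_set: "set (seg C a b) = (!) C ` {a..b}"
  by (auto simp: seg_def)

lemma seg_ne[simp]: "a \<le> b \<Longrightarrow> seg C a b \<noteq> []"
  by (simp add: seg_def del: upt_Suc)

lemma seg_hd[simp]: "a \<le> b \<Longrightarrow> hd (seg C a b) = C ! a"
  by (simp add: seg_def hd_map del: upt_Suc)

lemma seg_last[simp]: "a \<le> b \<Longrightarrow> last (seg C a b) = C ! b"
  by (simp add: seg_def last_map del: upt_Suc)

lemma graph_sym: "graph V E \<Longrightarrow> E x y \<Longrightarrow> E y x"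
  by (simp add: graph_def)

lemma graph_irr: "graph V E \<Longrightarrow> \<not> E x x"
  by (simp add: graph_def)

lemma path_iff:
  assumes sym: "\<forall>x y. E x y \<longrightarrow> E y x"
  shows "is_path V E p \<longleftrightarrow> p \<noteq> [] \<and> distinct p \<and> set p \<subseteq> V \<and>
     (\<forall>i. Suc i < length p \<longrightarrow> E (p!i) (p!Suc i)) \<and>
     (\<forall>i j. i < length p \<and> j < length p \<and> E (p!i) (p!j) \<longrightarrow> i = j+1 \<or> j = i+1)"
proof -
  have "(\<forall>i j. i < length p \<and> j < length p \<longrightarrow> E (p ! i) (p ! j) = (i = j + 1 \<or> j = i + 1))
     \<longleftrightarrow> (\<forall>i. Suc i < length p \<longrightarrow> E (p!i) (p!Suc i)) \<and>
     (\<forall>i j. i < length p \<and> j < length p \<and> E (p!i) (p!j) \<longrightarrow> i = j+1 \<or> j = i+1)"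
    using sym by (metis Suc_eq_plus1 Suc_lessD)
  then show ?thesis unfolding is_path_def by blast
qed

lemma mod_suc_lt: "i < n \<Longrightarrow> Suc i mod n = (if Suc i = n then 0 else Suc i)"
  by (cases "Suc i = n") auto

lemma hole_iff:
  assumes sym: "\<forall>x y. E x y \<longrightarrow> E y x"
  shows "is_hole V E p \<longleftrightarrow> length p \<ge> 4 \<and> distinct p \<and> set p \<subseteq> V \<and>
     (\<forall>i. Suc i < length p \<longrightarrow> E (p!i) (p!Suc i)) \<and> E (p!0) (p!(length p - 1)) \<and>
     (\<forall>i j. i < length p \<and> j < length p \<and> E (p!i) (p!j) \<longrightarrow> i = j+1 \<or> j = i+1
        \<or> (i = 0 \<and> j = length p - 1) \<or> (j = 0 \<and> i = length p - 1))"
proof -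
  let ?n = "length p"
  have A: "(\<forall>i j. i < ?n \<and> j < ?n \<longrightarrow> E (p ! i) (p ! j) = (j = (i + 1) mod ?n \<or> i = (j + 1) mod ?n))
     \<longleftrightarrow> (\<forall>i j. i < ?n \<and> j < ?n \<longrightarrow> E (p ! i) (p ! j) = (i = j+1 \<or> j = i+1
        \<or> (i = 0 \<and> j = ?n - 1) \<or> (j = 0 \<and> i = ?n - 1)))" if "?n \<ge> 4"
  proof -
    have "\<And>i j. i < ?n \<Longrightarrow> j < ?n \<Longrightarrow> (j = (i + 1) mod ?n \<or> i = (j + 1) mod ?n) =
        (i = j+1 \<or> j = i+1 \<or> (i = 0 \<and> j = ?n - 1) \<or> (j = 0 \<and> i = ?n - 1))"
    proof -
      fix i j assume "i < ?n" "j < ?n"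
      then show "(j = (i + 1) mod ?n \<or> i = (j + 1) mod ?n) =
        (i = j+1 \<or> j = i+1 \<or> (i = 0 \<and> j = ?n - 1) \<or> (j = 0 \<and> i = ?n - 1))"
        using that mod_suc_lt[of i ?n] mod_suc_lt[of j ?n] by (cases "Suc i = ?n"; cases "Suc j = ?n"; simp; linarith)
    qed
    then show ?thesis by (intro iffI allI impI) auto
  qed
  have B: "(\<forall>i j. i < ?n \<and> j < ?n \<longrightarrow> E (p ! i) (p ! j) = (i = j+1 \<or> j = i+1
        \<or> (i = 0 \<and> j = ?n - 1) \<or> (j = 0 \<and> i = ?n - 1)))
     \<longleftrightarrow> (\<forall>i. Suc i < length p \<longrightarrow> E (p!i) (p!Suc i)) \<and> E (p!0) (p!(length p - 1)) \<and>
     (\<forall>i j. i < length p \<and> j < length p \<and> E (p!i) (p!j) \<longrightarrow> i = j+1 \<or> j = i+1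
        \<or> (i = 0 \<and> j = length p - 1) \<or> (j = 0 \<and> i = length p - 1))" (is "?lhs \<longleftrightarrow> ?rhs") if "?n \<ge> 4"
  proof
    assume H: ?lhs
    show ?rhs
    proof (intro conjI allI impI)
      fix i assume "Suc i < ?n" then show "E (p!i) (p!Suc i)" using H by auto
    next
      show "E (p!0) (p!(?n - 1))" using H[rule_format, of 0 "?n - 1"] that by force
    next
      fix i j assume "i < length p \<and> j < length p \<and> E (p!i) (p!j)"
      then show "i = j+1 \<or> j = i+1 \<or> (i = 0 \<and> j = length p - 1) \<or> (j = 0 \<and> i = length p - 1)"
        using H by blast
    qed
  next
    assume H: ?rhs
    show ?lhs
    proof (intro allI impI)
      fix i j assume ij: "i < ?n \<and> j < ?n"
      show "E (p ! i) (p ! j) = (i = j+1 \<or> j = i+1 \<or> (i = 0 \<and> j = ?n - 1) \<or> (j = 0 \<and> i = ?n - 1))"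
      proof
        assume "E (p ! i) (p ! j)" then show "i = j+1 \<or> j = i+1 \<or> (i = 0 \<and> j = ?n - 1) \<or> (j = 0 \<and> i = ?n - 1)"
          using H ij by blast
      next
        assume "i = j+1 \<or> j = i+1 \<or> (i = 0 \<and> j = ?n - 1) \<or> (j = 0 \<and> i = ?n - 1)"
        then show "E (p ! i) (p ! j)" using H ij sym by (metis Suc_eq_plus1)
      qed
    qed
  qed
  show ?thesis
  proof (cases "length p \<ge> 4")
    case True
    show ?thesis unfolding is_hole_def A[OF True] B[OF True] using True by blast
  next
    case False then show ?thesis by (simp add: is_hole_def)
  qed
qed

lemma distinct_nth_eq: "distinct xs \<Longrightarrow> i < length xs \<Longrightarrow> j < length xs \<Longrightarrow> xs!i = xs!j \<Longrightarrow> i = j"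
  using nth_eq_iff_index_eq by blast

lemma path_glue:
  assumes G: "graph V E" and P1: "is_path V E L1" and P2: "is_path V E L2"
    and D: "set L1 \<inter> set L2 = {}" and J: "E (last L1) (hd L2)"
    and X: "\<forall>a\<in>set L1. \<forall>b\<in>set L2. E a b \<longrightarrow> a = last L1 \<and> b = hd L2"
  shows "is_path V E (L1 @ L2)"
proof -
  have sym: "\<forall>x y. E x y \<longrightarrow> E y x" using G graph_sym by metis
  note P1' = P1[unfolded path_iff[OF sym]] and P2' = P2[unfolded path_iff[OF sym]]
  let ?l = "length L1" and ?m = "length L2"
  have l: "?l > 0" "?m > 0" using P1' P2' by auto
  have lastc: "last L1 = L1 ! (?l - 1)" using P1' last_conv_nth by blast
  have hdc: "hd L2 = L2 ! 0" using P2' hd_conv_nth by blast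
  have cross: "i = ?l - 1 \<and> j = ?l" if "i < ?l" "?l \<le> j" "j < ?l + ?m" "E (L1!i) (L2!(j - ?l))" for i j
  proof -
    have "L1!i \<in> set L1" "L2!(j-?l) \<in> set L2" using that by auto
    then have "L1!i = last L1" "L2!(j-?l) = hd L2" using X that(4) by blast+
    then have "i = ?l - 1" "j - ?l = 0" using lastc hdc P1' P2' that distinct_nth_eq
      by (metis diff_less less_one l(1), metis l(2) less_diff_conv2 add.commute that(2,3))
    then show ?thesis using that by auto
  qed
  show ?thesis unfolding path_iff[OF sym]
  proof (intro conjI allI impI)
    show "L1 @ L2 \<noteq> []" using l by auto
    show "distinct (L1 @ L2)" using P1' P2' D by auto
    show "set (L1 @ L2) \<subseteq> V" using P1' P2' by auto
  next
    fix i assume i: "Suc i < length (L1 @ L2)"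
    consider "Suc i < ?l" | "Suc i = ?l" | "?l \<le> i" by linarith
    then show "E ((L1 @ L2) ! i) ((L1 @ L2) ! Suc i)"
    proof cases
      case 1 then show ?thesis using P1' by (simp add: nth_append)
    next
      case 2 then have "i = ?l - 1" by simp
      then show ?thesis using J lastc hdc l by (simp add: nth_append)
    next
      case 3 then show ?thesis using P2' i by (simp add: nth_append Suc_diff_le)
    qed
  next
    fix i j assume ij: "i < length (L1 @ L2) \<and> j < length (L1 @ L2) \<and> E ((L1 @ L2) ! i) ((L1 @ L2) ! j)"
    consider "i < ?l" "j < ?l" | "i < ?l" "?l \<le> j" | "?l \<le> i" "j < ?l" | "?l \<le> i" "?l \<le> j" by linarith
    then show "i = j + 1 \<or> j = i + 1"
    proof cases
      case 1 then show ?thesis using P1' ij by (auto simp: nth_append)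
    next
      case 2 then show ?thesis using cross[of i j] ij by (auto simp: nth_append)
    next
      case 3 then show ?thesis using cross[of j i] ij sym by (auto simp: nth_append)
    next
      case 4
      have "i - ?l < ?m" "j - ?l < ?m" using ij 4 by auto
      moreover have "E (L2!(i-?l)) (L2!(j-?l))" using ij 4 by (simp add: nth_append)
      ultimately have "i - ?l = j - ?l + 1 \<or> j - ?l = i - ?l + 1"
        using P2' by blast
      then show ?thesis using 4 by linarith
    qed
  qed
qed

lemma hole_glue:
  assumes G: "graph V E" and P1: "is_path V E L1" and P2: "is_path V E L2"
    and D: "set L1 \<inter> set L2 = {}" and L: "length L1 + length L2 \<ge> 4"
    and J: "E (last L1) (hd L2)" and J2: "E (hd L1) (last L2)"
    and X: "\<forall>a\<in>set L1. \<forall>b\<in>set L2. E a b \<longrightarrow> (a = last L1 \<and> b = hd L2) \<or> (a = hd L1 \<and> b = last L2)"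
  shows "is_hole V E (L1 @ L2)"
proof -
  have sym: "\<forall>x y. E x y \<longrightarrow> E y x" using G graph_sym by metis
  note P1' = P1[unfolded path_iff[OF sym]] and P2' = P2[unfolded path_iff[OF sym]]
  let ?l = "length L1" and ?m = "length L2"
  have l: "?l > 0" "?m > 0" using P1' P2' by auto
  have lastc: "last L1 = L1 ! (?l - 1)" using P1' last_conv_nth by blast
  have hdc: "hd L2 = L2 ! 0" using P2' hd_conv_nth by blast
  have lastc2: "last L2 = L2 ! (?m - 1)" using P2' last_conv_nth by blast
  have hdc1: "hd L1 = L1 ! 0" using P1' hd_conv_nth by blast
  have cross: "(i = ?l - 1 \<and> j = ?l) \<or> (i = 0 \<and> j = ?l + ?m - 1)"
    if "i < ?l" "?l \<le> j" "j < ?l + ?m" "E (L1!i) (L2!(j - ?l))" for i j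
  proof -
    have "L1!i \<in> set L1" "L2!(j-?l) \<in> set L2" using that by auto
    then have "(L1!i = last L1 \<and> L2!(j-?l) = hd L2) \<or> (L1!i = hd L1 \<and> L2!(j-?l) = last L2)"
      using X that(4) by blast
    moreover have "j - ?l < ?m" using that by linarith
    ultimately have "(i = ?l - 1 \<and> j - ?l = 0) \<or> (i = 0 \<and> j - ?l = ?m - 1)"
      using lastc hdc lastc2 hdc1 P1' P2' that distinct_nth_eq l
      by (metis diff_less less_one)
    then show ?thesis using that by auto
  qed
  show ?thesis unfolding hole_iff[OF sym]
  proof (intro conjI allI impI)
    show "4 \<le> length (L1 @ L2)" using L by simp
    show "distinct (L1 @ L2)" using P1' P2' D by auto
    show "set (L1 @ L2) \<subseteq> V" using P1' P2' by auto
    show "E ((L1 @ L2) ! 0) ((L1 @ L2) ! (length (L1 @ L2) - 1))"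
    proof -
      have "\<not> (?l + ?m - 1 < ?l)" "?l + ?m - 1 - ?l = ?m - 1" using l by linarith+
      then show ?thesis using J2 hdc1 lastc2 l by (simp add: nth_append)
    qed
  next
    fix i assume i: "Suc i < length (L1 @ L2)"
    consider "Suc i < ?l" | "Suc i = ?l" | "?l \<le> i" by linarith
    then show "E ((L1 @ L2) ! i) ((L1 @ L2) ! Suc i)"
    proof cases
      case 1 then show ?thesis using P1' by (simp add: nth_append)
    next
      case 2 then have "i = ?l - 1" by simp
      then show ?thesis using J lastc hdc l by (simp add: nth_append)
    next
      case 3 then show ?thesis using P2' i by (simp add: nth_append Suc_diff_le)
    qed
  next
    fix i j assume ij: "i < length (L1 @ L2) \<and> j < length (L1 @ L2) \<and> E ((L1 @ L2) ! i) ((L1 @ L2) ! j)"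
    consider "i < ?l" "j < ?l" | "i < ?l" "?l \<le> j" | "?l \<le> i" "j < ?l" | "?l \<le> i" "?l \<le> j" by linarith
    then show "i = j + 1 \<or> j = i + 1 \<or> (i = 0 \<and> j = length (L1 @ L2) - 1) \<or> (j = 0 \<and> i = length (L1 @ L2) - 1)"
    proof cases
      case 1 then show ?thesis using P1' ij by (auto simp: nth_append)
    next
      case 2 then show ?thesis using cross[of i j] ij by (auto simp: nth_append)
    next
      case 3 then show ?thesis using cross[of j i] ij sym by (auto simp: nth_append)
    next
      case 4
      have "i - ?l < ?m" "j - ?l < ?m" using ij 4 by auto
      moreover have "E (L2!(i-?l)) (L2!(j-?l))" using ij 4 by (simp add: nth_append)
      ultimately have "i - ?l = j - ?l + 1 \<or> j - ?l = i - ?l + 1"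
        using P2' by blast
      then show ?thesis using 4 by linarith
    qed
  qed
qed

lemma hole_adj:
  assumes G: "graph V E" and H: "is_hole V E C" and "a < length C" "b < length C"
  shows "E (C!a) (C!b) \<longleftrightarrow> (a = b+1 \<or> b = a+1 \<or> (a = 0 \<and> b = length C - 1) \<or> (b = 0 \<and> a = length C - 1))"
proof -
  have sym: "\<forall>x y. E x y \<longrightarrow> E y x" using G graph_sym by metis
  have md: "\<And>i. i < length C \<Longrightarrow> Suc i mod length C = (if Suc i = length C then 0 else Suc i)"
    by (rule mod_suc_lt)
  have L: "length C \<ge> 4" using H is_hole_def by blast
  have "E (C!a) (C!b) \<longleftrightarrow> (b = (a + 1) mod length C \<or> a = (b + 1) mod length C)"
    using H assms unfolding is_hole_def by blast
  then show ?thesis using md[of a] md[of b] assms L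
    by (cases "Suc a = length C"; cases "Suc b = length C"; simp; linarith)
qed


lemma seg_path:
  assumes G: "graph V E" and H: "is_hole V E C" and ab: "a \<le> b" "b < length C"
    and nw: "\<not> (a = 0 \<and> b = length C - 1)"
  shows "is_path V E (seg C a b)"
proof -
  have sym: "\<forall>x y. E x y \<longrightarrow> E y x" using G graph_sym by metis
  have dC: "distinct C" "set C \<subseteq> V" using H unfolding is_hole_def by blast+
  show ?thesis unfolding path_iff[OF sym]
  proof (intro conjI allI impI)
    show "seg C a b \<noteq> []" using ab by simp
    have "inj_on ((!) C) {a..<Suc b}" using inj_on_nth[OF dC(1), of "{a..<Suc b}"] ab by auto
    then show "distinct (seg C a b)" unfolding seg_def
      by (simp add: distinct_map del: upt_Suc)
    show "set (seg C a b) \<subseteq> V" unfolding seg_set using dC ab by auto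
  next
    fix i assume i: "Suc i < length (seg C a b)"
    then have "a + Suc i < length C" "a + i < length C" using ab by auto
    then have "E (C!(a+i)) (C!(a + Suc i))"
      using hole_adj[OF G H, of "a+i" "a + Suc i"] by simp
    then show "E (seg C a b ! i) (seg C a b ! Suc i)" using i by simp
  next
    fix i j assume ij: "i < length (seg C a b) \<and> j < length (seg C a b) \<and> E (seg C a b ! i) (seg C a b ! j)"
    have "seg C a b ! i = C!(a+i)" "seg C a b ! j = C!(a+j)" using ij by auto
    then have e: "E (C!(a+i)) (C!(a+j))" using ij by simp
    have l: "a + i < length C" "a + j < length C" "a + i \<le> b" "a + j \<le> b" using ij ab by auto
    have "a+i = a+j+1 \<or> a+j = a+i+1 \<or> (a+i = 0 \<and> a+j = length C - 1) \<or> (a+j = 0 \<and> a+i = length C - 1)"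
      using hole_adj[OF G H l(1,2)] e by blast
    then show "i = j + 1 \<or> j = i + 1" using l nw ab by linarith
  qed
qed

lemma rev_path:
  assumes G: "graph V E" and P: "is_path V E p"
  shows "is_path V E (rev p)"
proof -
  have sym: "\<forall>x y. E x y \<longrightarrow> E y x" using G graph_sym by metis
  note P' = P[unfolded path_iff[OF sym]]
  show ?thesis unfolding path_iff[OF sym]
  proof (intro conjI allI impI)
    show "rev p \<noteq> []" "distinct (rev p)" "set (rev p) \<subseteq> V" using P' by auto
  next
    fix i assume i: "Suc i < length (rev p)"
    then have "E (p ! (length p - Suc (Suc i))) (p ! Suc (length p - Suc (Suc i)))"
      using P' by auto
    moreover have "Suc (length p - Suc (Suc i)) = length p - Suc i" using i by auto
    ultimately show "E (rev p ! i) (rev p ! Suc i)" using i sym by (auto simp: rev_nth)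
  next
    fix i j assume ij: "i < length (rev p) \<and> j < length (rev p) \<and> E (rev p ! i) (rev p ! j)"
    then have "E (p ! (length p - Suc i)) (p ! (length p - Suc j))" by (auto simp: rev_nth)
    moreover have "length p - Suc i < length p" "length p - Suc j < length p" using ij by auto
    ultimately have "length p - Suc i = length p - Suc j + 1 \<or> length p - Suc j = length p - Suc i + 1"
      using P' by blast
    then show "i = j + 1 \<or> j = i + 1" using ij by auto
  qed
qed

lemma single_path: "x \<in> V \<Longrightarrow> graph V E \<Longrightarrow> is_path V E [x]"
  by (auto simp: is_path_def graph_def)

lemma path_append_left: "is_path V E (xs @ ys) \<Longrightarrow> xs \<noteq> [] \<Longrightarrow> is_path V E xs"
proof -
  assume P: "is_path V E (xs @ ys)" and ne: "xs \<noteq> []"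
  show "is_path V E xs" unfolding is_path_def
  proof (intro conjI allI impI)
    show "xs \<noteq> []" "distinct xs" "set xs \<subseteq> V" using P ne by (auto simp: is_path_def)
  next
    fix i j assume ij: "i < length xs \<and> j < length xs"
    have "E ((xs@ys) ! i) ((xs@ys) ! j) = (i = j + 1 \<or> j = i + 1)"
      using P ij unfolding is_path_def by auto
    then show "E (xs ! i) (xs ! j) = (i = j + 1 \<or> j = i + 1)" using ij by (simp add: nth_append)
  qed
qed

lemma path_append_right: "is_path V E (xs @ ys) \<Longrightarrow> ys \<noteq> [] \<Longrightarrow> is_path V E ys"
proof -
  assume P: "is_path V E (xs @ ys)" and ne: "ys \<noteq> []"
  show "is_path V E ys" unfolding is_path_def
  proof (intro conjI allI impI)
    show "ys \<noteq> []" "distinct ys" "set ys \<subseteq> V" using P ne by (auto simp: is_path_def)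
  next
    fix i j assume ij: "i < length ys \<and> j < length ys"
    have "E ((xs@ys) ! (length xs + i)) ((xs@ys) ! (length xs + j)) =
          (length xs + i = length xs + j + 1 \<or> length xs + j = length xs + i + 1)"
    proof -
      have H: "\<forall>i j. i < length (xs@ys) \<and> j < length (xs@ys) \<longrightarrow> E ((xs@ys)!i) ((xs@ys)!j) = (i = j + 1 \<or> j = i + 1)"
        using P unfolding is_path_def by blast
      show ?thesis using H[rule_format, of "length xs + i" "length xs + j"] ij by simp
    qed
    then show "E (ys ! i) (ys ! j) = (i = j + 1 \<or> j = i + 1)" by simp
  qed
qed

lemma mod_cancel_aux: "(a::nat) < n \<Longrightarrow> b < n \<Longrightarrow> a \<le> b \<Longrightarrow> (k + a) mod n = (k + b) mod n \<Longrightarrow> a = b"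
proof -
  assume a: "a < n" "b < n" "a \<le> b" "(k + a) mod n = (k + b) mod n"
  have "n dvd (k + b) - (k + a)" using mod_eq_dvd_iff_nat[of "k+a" "k+b" n] a by simp
  then have "n dvd b - a" by simp
  moreover have "b - a < n" using a by simp
  ultimately show "a = b" using a by (metis dvd_imp_le le_antisym not_less diff_is_0_eq zero_less_diff)
qed
lemma mod_cancel: "(a::nat) < n \<Longrightarrow> b < n \<Longrightarrow> (k + a) mod n = (k + b) mod n \<Longrightarrow> a = b"
  by (metis mod_cancel_aux nat_le_linear)

lemma hole_rotate:
  assumes H: "is_hole V E C"
  shows "is_hole V E (rotate k C)"
  unfolding is_hole_def
proof (intro conjI allI impI)
  let ?n = "length C"
  have H': "length C \<ge> 4" "distinct C" "set C \<subseteq> V"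
    "\<forall>i j. i < ?n \<and> j < ?n \<longrightarrow> (E (C!i) (C!j) \<longleftrightarrow> (j = (i + 1) mod ?n \<or> i = (j + 1) mod ?n))"
    using H unfolding is_hole_def by blast+
  show "4 \<le> length (rotate k C)" "distinct (rotate k C)" "set (rotate k C) \<subseteq> V" using H' by auto
  fix i j assume ij: "i < length (rotate k C) \<and> j < length (rotate k C)"
  then have ij': "i < ?n" "j < ?n" by auto
  have n0: "?n > 0" using H' by auto
  have "E (rotate k C ! i) (rotate k C ! j) = E (C ! ((k + i) mod ?n)) (C ! ((k + j) mod ?n))"
    using ij' by (simp add: nth_rotate)
  also have "\<dots> = ((k + j) mod ?n = ((k + i) mod ?n + 1) mod ?n \<or> (k + i) mod ?n = ((k + j) mod ?n + 1) mod ?n)"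
    using H'(4) n0 by simp
  also have "\<dots> = ((k + j) mod ?n = (k + (i + 1)) mod ?n \<or> (k + i) mod ?n = (k + (j + 1)) mod ?n)"
    by (simp add: mod_simps add.assoc)
  also have "\<dots> = (j = (i + 1) mod ?n \<or> i = (j + 1) mod ?n)"
  proof -
    have m1: "(i+1) mod ?n < ?n" "(j+1) mod ?n < ?n" using n0 by auto
    have e1: "(k + (i + 1)) mod ?n = (k + (i+1) mod ?n) mod ?n" "(k + (j + 1)) mod ?n = (k + (j+1) mod ?n) mod ?n"
      by (simp_all add: mod_simps)
    show ?thesis using mod_cancel[OF ij'(2) m1(1), of k] mod_cancel[OF ij'(1) m1(2), of k] e1 by auto
  qed
  finally show "E (rotate k C ! i) (rotate k C ! j) = (j = (i + 1) mod length (rotate k C) \<or> i = (j + 1) mod length (rotate k C))"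
    by simp
qed





lemma hole_set_glue:
  assumes "graph V E" "is_path V E L1" "is_path V E L2" "set L1 \<inter> set L2 = {}"
    "length L1 + length L2 \<ge> 4" "E (last L1) (hd L2)" "E (hd L1) (last L2)"
    "\<forall>a\<in>set L1. \<forall>b\<in>set L2. E a b \<longrightarrow> (a = last L1 \<and> b = hd L2) \<or> (a = hd L1 \<and> b = last L2)"
  shows "hole_set V E (set L1 \<union> set L2)"
  unfolding hole_set_def by (rule exI[of _ "L1 @ L2"]) (simp add: hole_glue[OF assms])

lemma path_H: "is_path V E p \<Longrightarrow> i < length p \<Longrightarrow> j < length p \<Longrightarrow> E (p!i) (p!j) = (i = j + 1 \<or> j = i + 1)"
  unfolding is_path_def by blast

lemma path_hd_nbr:
  assumes P: "is_path V E (x # L)" and b: "b \<in> set L" and e: "E x b"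
  shows "b = hd L"
proof -
  obtain k where k: "k < length L" "b = L ! k" using b by (metis in_set_conv_nth)
  have "E ((x#L) ! 0) ((x#L) ! Suc k) = (0 = Suc k + 1 \<or> Suc k = 0 + 1)"
    using path_H[OF P, of 0 "Suc k"] k by simp
  then have "k = 0" using e k by simp
  then show ?thesis using k by (simp add: hd_conv_nth)
qed

lemma path_hd_adj:
  assumes P: "is_path V E (x # L)" and ne: "L \<noteq> []"
  shows "E x (hd L)"
proof -
  have "E ((x#L) ! 0) ((x#L) ! 1) = (0 = 1 + 1 \<or> (1::nat) = 0 + 1)"
    using path_H[OF P, of 0 1] ne by simp
  then show ?thesis using ne by (simp add: hd_conv_nth)
qed

lemma path_last_nbr:
  assumes G: "graph V E" and P: "is_path V E (L @ [y])" and b: "b \<in> set L" and e: "E y b"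
  shows "b = last L"
proof -
  have "is_path V E (y # rev L)" using rev_path[OF G P] by simp
  then have "b = hd (rev L)" using path_hd_nbr b e by (metis set_rev)
  then show ?thesis using b by (metis hd_rev)
qed

lemma path_last_adj:
  assumes G: "graph V E" and P: "is_path V E (L @ [y])" and ne: "L \<noteq> []"
  shows "E y (last L)"
proof -
  have "is_path V E (y # rev L)" using rev_path[OF G P] by simp
  then show ?thesis using path_hd_adj ne by (metis hd_rev rev_is_Nil_conv)
qed

lemma path_distinct: "is_path V E p \<Longrightarrow> distinct p"
  unfolding is_path_def by blast

lemma path_sub_mid:
  assumes "is_path V E (x # M @ [y])" "M \<noteq> []"
  shows "is_path V E M"
proof -
  have "is_path V E (x # M)" using path_append_left[of V E "x # M" "[y]"] assms by simp
  then show ?thesis using path_append_right[of V E "[x]" M] assms by simp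
qed

lemma theta_intro:
  assumes G: "graph V E" and nab: "\<not> E a b"
    and Q1: "is_path V E (a # M1 @ [b])" and Q2: "is_path V E (a # M2 @ [b])" and Q3: "is_path V E (a # M3 @ [b])"
    and ne: "M1 \<noteq> []" "M2 \<noteq> []" "M3 \<noteq> []"
    and D: "set M1 \<inter> set M2 = {}" "set M1 \<inter> set M3 = {}" "set M2 \<inter> set M3 = {}"
    and X12: "\<forall>p\<in>set M1. \<forall>q\<in>set M2. \<not> E p q"
    and X13: "\<forall>p\<in>set M1. \<forall>q\<in>set M3. \<not> E p q"
    and X23: "\<forall>p\<in>set M2. \<forall>q\<in>set M3. \<not> E p q"
  shows "has_theta V E"
proof -
  have sym: "\<And>x y. E x y \<Longrightarrow> E y x" using G graph_sym by metis
  have ab: "a \<noteq> b" using path_distinct[OF Q1] by auto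
  have nin: "a \<notin> set M1" "b \<notin> set M1" "a \<notin> set M2" "b \<notin> set M2" "a \<notin> set M3" "b \<notin> set M3"
    using path_distinct[OF Q1] path_distinct[OF Q2] path_distinct[OF Q3] by auto
  have un: "hole_set V E (set (a # Mi @ [b]) \<union> set (a # Mj @ [b]))"
    if Qi: "is_path V E (a # Mi @ [b])" and Qj: "is_path V E (a # Mj @ [b])"
      and nei: "Mi \<noteq> []" and nej: "Mj \<noteq> []" and Dij: "set Mi \<inter> set Mj = {}"
      and Xij: "\<forall>p\<in>set Mi. \<forall>q\<in>set Mj. \<not> E p q"
      and nini: "a \<notin> set Mi" "b \<notin> set Mi" and ninj: "a \<notin> set Mj" "b \<notin> set Mj"
    for Mi Mj
  proof -
    have PM: "is_path V E (rev Mj)" using rev_path[OF G path_sub_mid[OF Qj nej]] .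
    have Qj1: "is_path V E (a # Mj)" using path_append_left[of V E "a # Mj" "[b]"] Qj by simp
    have Qj2: "is_path V E (Mj @ [b])" using path_append_right[of V E "[a]" "Mj @ [b]"] Qj nej by simp
    have "hole_set V E (set (a # Mi @ [b]) \<union> set (rev Mj))"
    proof (rule hole_set_glue[OF G Qi PM])
      show "set (a # Mi @ [b]) \<inter> set (rev Mj) = {}" using Dij ninj by auto
      show "4 \<le> length (a # Mi @ [b]) + length (rev Mj)" using nei nej
        by (cases Mi; cases Mj; simp)
      show "E (last (a # Mi @ [b])) (hd (rev Mj))" using path_last_adj[OF G Qj2 nej] by (simp add: hd_rev)
      show "E (hd (a # Mi @ [b])) (last (rev Mj))" using path_hd_adj[OF Qj1 nej] by (simp add: last_rev)
      show "\<forall>p\<in>set (a # Mi @ [b]). \<forall>q\<in>set (rev Mj). E p q \<longrightarrow>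
          p = last (a # Mi @ [b]) \<and> q = hd (rev Mj) \<or> p = hd (a # Mi @ [b]) \<and> q = last (rev Mj)"
      proof (intro ballI impI)
        fix p q assume p: "p \<in> set (a # Mi @ [b])" and q: "q \<in> set (rev Mj)" and e: "E p q"
        have q': "q \<in> set Mj" using q by simp
        consider "p = a" | "p = b" | "p \<in> set Mi" using p by auto
        then show "p = last (a # Mi @ [b]) \<and> q = hd (rev Mj) \<or> p = hd (a # Mi @ [b]) \<and> q = last (rev Mj)"
        proof cases
          case 1 then show ?thesis using path_hd_nbr[OF Qj1 q'] e by (simp add: last_rev)
        next
          case 2 then show ?thesis using path_last_nbr[OF G Qj2 q'] e by (simp add: hd_rev)
        next
          case 3 then show ?thesis using Xij q' e by blast
        qed
      qed
    qed
    moreover have "set (a # Mi @ [b]) \<union> set (a # Mj @ [b]) = set (a # Mi @ [b]) \<union> set (rev Mj)" by auto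
    ultimately show ?thesis by simp
  qed
  have sX21: "\<forall>p\<in>set M2. \<forall>q\<in>set M1. \<not> E p q" using X12 sym by blast
  have sX31: "\<forall>p\<in>set M3. \<forall>q\<in>set M1. \<not> E p q" using X13 sym by blast
  have sX32: "\<forall>p\<in>set M3. \<forall>q\<in>set M2. \<not> E p q" using X23 sym by blast
  show ?thesis unfolding has_theta_def
  proof (intro exI conjI)
    show "a \<noteq> b" "\<not> E a b" by fact+
    show "path_from_to V E (a # M1 @ [b]) a b" "path_from_to V E (a # M2 @ [b]) a b"
      "path_from_to V E (a # M3 @ [b]) a b" using Q1 Q2 Q3 by (simp_all add: path_from_to_def)
    show "set (a # M1 @ [b]) \<inter> set (a # M2 @ [b]) = {a, b}"
      "set (a # M1 @ [b]) \<inter> set (a # M3 @ [b]) = {a, b}"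
      "set (a # M2 @ [b]) \<inter> set (a # M3 @ [b]) = {a, b}" using D nin by auto
    show "hole_set V E (set (a # M1 @ [b]) \<union> set (a # M2 @ [b]))"
      by (rule un[OF Q1 Q2 ne(1,2) D(1) X12]) (use nin in auto)
    show "hole_set V E (set (a # M1 @ [b]) \<union> set (a # M3 @ [b]))"
      by (rule un[OF Q1 Q3 ne(1,3) D(2) X13]) (use nin in auto)
    show "hole_set V E (set (a # M2 @ [b]) \<union> set (a # M3 @ [b]))"
      by (rule un[OF Q2 Q3 ne(2,3) D(3) X23]) (use nin in auto)
  qed
qed


lemma len2: "Q \<noteq> [] \<Longrightarrow> hd Q \<noteq> last Q \<Longrightarrow> 2 \<le> length Q"
  by (cases Q) (auto split: if_splits simp: Suc_le_eq)

lemma path_ne: "is_path V E p \<Longrightarrow> p \<noteq> []"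
  unfolding is_path_def by blast

lemma pyramid_intro:
  assumes G: "graph V E"
    and Q1: "is_path V E (a # R1)" and Q2: "is_path V E (a # R2)" and Q3: "is_path V E (a # R3)"
    and ne: "R1 \<noteq> []" "R2 \<noteq> []" "R3 \<noteq> []"
    and T: "E (last R1) (last R2)" "E (last R1) (last R3)" "E (last R2) (last R3)"
    and D: "set R1 \<inter> set R2 = {}" "set R1 \<inter> set R3 = {}" "set R2 \<inter> set R3 = {}"
    and X12: "\<forall>p\<in>set R1. \<forall>q\<in>set R2. E p q \<longrightarrow> p = last R1 \<and> q = last R2"
    and X13: "\<forall>p\<in>set R1. \<forall>q\<in>set R3. E p q \<longrightarrow> p = last R1 \<and> q = last R3"
    and X23: "\<forall>p\<in>set R2. \<forall>q\<in>set R3. E p q \<longrightarrow> p = last R2 \<and> q = last R3"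
    and L: "length R1 + length R2 \<ge> 3" "length R1 + length R3 \<ge> 3" "length R2 + length R3 \<ge> 3"
  shows "has_pyramid V E"
proof -
  have nin: "a \<notin> set R1" "a \<notin> set R2" "a \<notin> set R3"
    using path_distinct[OF Q1] path_distinct[OF Q2] path_distinct[OF Q3] by auto
  have un: "hole_set V E (set (a # Ri) \<union> set (a # Rj))"
    if Qi: "is_path V E (a # Ri)" and Qj: "is_path V E (a # Rj)"
      and nei: "Ri \<noteq> []" and nej: "Rj \<noteq> []" and Dij: "set Ri \<inter> set Rj = {}"
      and Xij: "\<forall>p\<in>set Ri. \<forall>q\<in>set Rj. E p q \<longrightarrow> p = last Ri \<and> q = last Rj"
      and Tij: "E (last Ri) (last Rj)" and Lij: "length Ri + length Rj \<ge> 3"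
      and ninj: "a \<notin> set Rj"
    for Ri Rj
  proof -
    have PM: "is_path V E (rev Rj)"
      using rev_path[OF G path_append_right[of V E "[a]" Rj]] Qj nej by simp
    have "hole_set V E (set (a # Ri) \<union> set (rev Rj))"
    proof (rule hole_set_glue[OF G Qi PM])
      show "set (a # Ri) \<inter> set (rev Rj) = {}" using Dij ninj by auto
      show "4 \<le> length (a # Ri) + length (rev Rj)" using Lij by simp
      show "E (last (a # Ri)) (hd (rev Rj))" using Tij nei by (simp add: hd_rev)
      show "E (hd (a # Ri)) (last (rev Rj))" using path_hd_adj[OF Qj nej] by (simp add: last_rev)
      show "\<forall>p\<in>set (a # Ri). \<forall>q\<in>set (rev Rj). E p q \<longrightarrow>
          p = last (a # Ri) \<and> q = hd (rev Rj) \<or> p = hd (a # Ri) \<and> q = last (rev Rj)"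
      proof (intro ballI impI)
        fix p q assume p: "p \<in> set (a # Ri)" and q: "q \<in> set (rev Rj)" and e: "E p q"
        have q': "q \<in> set Rj" using q by simp
        consider "p = a" | "p \<in> set Ri" using p by auto
        then show "p = last (a # Ri) \<and> q = hd (rev Rj) \<or> p = hd (a # Ri) \<and> q = last (rev Rj)"
        proof cases
          case 1 then show ?thesis using path_hd_nbr[OF Qj q'] e by (simp add: last_rev)
        next
          case 2 then show ?thesis using Xij q' e nei by (simp add: hd_rev)
        qed
      qed
    qed
    moreover have "set (a # Ri) \<union> set (a # Rj) = set (a # Ri) \<union> set (rev Rj)" by auto
    ultimately show ?thesis by simp
  qed
  have sym: "\<And>x y. E x y \<Longrightarrow> E y x" using G graph_sym by metis
  show ?thesis unfolding has_pyramid_def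
  proof (intro exI conjI)
    show "E (last R1) (last R2)" "E (last R1) (last R3)" "E (last R2) (last R3)" by fact+
    show "path_from_to V E (a # R1) a (last R1)" "path_from_to V E (a # R2) a (last R2)"
      "path_from_to V E (a # R3) a (last R3)" using Q1 Q2 Q3 ne by (simp_all add: path_from_to_def)
    show "set (a # R1) \<inter> set (a # R2) = {a}" "set (a # R1) \<inter> set (a # R3) = {a}"
      "set (a # R2) \<inter> set (a # R3) = {a}" using D nin by auto
    show "hole_set V E (set (a # R1) \<union> set (a # R2))"
      by (rule un[OF Q1 Q2 ne(1,2) D(1) X12 T(1) L(1) nin(2)])
    show "hole_set V E (set (a # R1) \<union> set (a # R3))"
      by (rule un[OF Q1 Q3 ne(1,3) D(2) X13 T(2) L(2) nin(3)])
    show "hole_set V E (set (a # R2) \<union> set (a # R3))"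
      by (rule un[OF Q2 Q3 ne(2,3) D(3) X23 T(3) L(3) nin(3)])
  qed
qed

lemma prism_intro:
  assumes G: "graph V E"
    and Q1: "is_path V E Q1" and Q2: "is_path V E Q2" and Q3: "is_path V E Q3"
    and TA: "E (hd Q1) (hd Q2)" "E (hd Q1) (hd Q3)" "E (hd Q2) (hd Q3)"
    and TB: "E (last Q1) (last Q2)" "E (last Q1) (last Q3)" "E (last Q2) (last Q3)"
    and AB: "{hd Q1, hd Q2, hd Q3} \<inter> {last Q1, last Q2, last Q3} = {}"
    and D: "set Q1 \<inter> set Q2 = {}" "set Q1 \<inter> set Q3 = {}" "set Q2 \<inter> set Q3 = {}"
    and X12: "\<forall>p\<in>set Q1. \<forall>q\<in>set Q2. E p q \<longrightarrow> (p = hd Q1 \<and> q = hd Q2) \<or> (p = last Q1 \<and> q = last Q2)"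
    and X13: "\<forall>p\<in>set Q1. \<forall>q\<in>set Q3. E p q \<longrightarrow> (p = hd Q1 \<and> q = hd Q3) \<or> (p = last Q1 \<and> q = last Q3)"
    and X23: "\<forall>p\<in>set Q2. \<forall>q\<in>set Q3. E p q \<longrightarrow> (p = hd Q2 \<and> q = hd Q3) \<or> (p = last Q2 \<and> q = last Q3)"
  shows "has_prism V E"
proof -
  have l: "2 \<le> length Q1" "2 \<le> length Q2" "2 \<le> length Q3"
  proof -
    have "hd Q1 \<noteq> last Q1" "hd Q2 \<noteq> last Q2" "hd Q3 \<noteq> last Q3" using AB by auto
    then show "2 \<le> length Q1" "2 \<le> length Q2" "2 \<le> length Q3"
      using len2 path_ne[OF Q1] path_ne[OF Q2] path_ne[OF Q3] by blast+
  qed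
  have un: "hole_set V E (set Qi \<union> set Qj)"
    if Qi: "is_path V E Qi" and Qj: "is_path V E Qj" and Dij: "set Qi \<inter> set Qj = {}"
      and Xij: "\<forall>p\<in>set Qi. \<forall>q\<in>set Qj. E p q \<longrightarrow> (p = hd Qi \<and> q = hd Qj) \<or> (p = last Qi \<and> q = last Qj)"
      and Ta: "E (hd Qi) (hd Qj)" and Tb: "E (last Qi) (last Qj)"
      and li: "2 \<le> length Qi" and lj: "2 \<le> length Qj"
    for Qi Qj
  proof -
    have nej: "Qj \<noteq> []" using lj by auto
    have "hole_set V E (set Qi \<union> set (rev Qj))"
    proof (rule hole_set_glue[OF G Qi rev_path[OF G Qj]])
      show "set Qi \<inter> set (rev Qj) = {}" using Dij by auto
      show "4 \<le> length Qi + length (rev Qj)" using li lj by simp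
      show "E (last Qi) (hd (rev Qj))" using Tb by (simp add: hd_rev)
      show "E (hd Qi) (last (rev Qj))" using Ta by (simp add: last_rev)
      show "\<forall>p\<in>set Qi. \<forall>q\<in>set (rev Qj). E p q \<longrightarrow>
          p = last Qi \<and> q = hd (rev Qj) \<or> p = hd Qi \<and> q = last (rev Qj)"
        using Xij by (auto simp: hd_rev last_rev)
    qed
    then show ?thesis by simp
  qed
  show ?thesis unfolding has_prism_def
  proof (intro exI conjI)
    show "path_from_to V E Q1 (hd Q1) (last Q1)" "path_from_to V E Q2 (hd Q2) (last Q2)"
      "path_from_to V E Q3 (hd Q3) (last Q3)" using Q1 Q2 Q3 by (simp_all add: path_from_to_def)
    show "hole_set V E (set Q1 \<union> set Q2)" by (rule un[OF Q1 Q2 D(1) X12 TA(1) TB(1) l(1,2)])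
    show "hole_set V E (set Q1 \<union> set Q3)" by (rule un[OF Q1 Q3 D(2) X13 TA(2) TB(2) l(1,3)])
    show "hole_set V E (set Q2 \<union> set Q3)" by (rule un[OF Q2 Q3 D(3) X23 TA(3) TB(3) l(2,3)])
  qed (use assms in auto)
qed



lemma path_cons:
  assumes G: "graph V E" and P: "is_path V E L" and x: "x \<in> V" "x \<notin> set L" and e: "E x (hd L)"
    and X: "\<forall>b\<in>set L. E x b \<longrightarrow> b = hd L"
  shows "is_path V E (x # L)"
  using path_glue[OF G single_path[OF x(1) G] P] x e X by simp

lemma path_snoc:
  assumes G: "graph V E" and P: "is_path V E L" and y: "y \<in> V" "y \<notin> set L" and e: "E (last L) y"
    and X: "\<forall>a\<in>set L. E a y \<longrightarrow> a = last L"
  shows "is_path V E (L @ [y])"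
  using path_glue[OF G P single_path[OF y(1) G]] y e X by simp

lemma ball_seg: "(\<forall>w\<in>set (seg C a b). Q w) \<longleftrightarrow> (\<forall>t. a \<le> t \<and> t \<le> b \<longrightarrow> Q (C!t))"
  unfolding seg_set by auto

lemma seg_cons: "a \<le> b \<Longrightarrow> seg C a b = C!a # seg C (Suc a) b"
  unfolding seg_def by (simp add: upt_conv_Cons del: upt_Suc)

lemma seg_snoc: "a \<le> Suc b \<Longrightarrow> seg C a (Suc b) = seg C a b @ [C!(Suc b)]"
  unfolding seg_def by simp

locale hol =
  fixes V :: "'a set" and E C
  assumes G: "graph V E" and H: "is_hole V E C"
begin

abbreviation "n \<equiv> length C"

lemma sym: "E x y \<Longrightarrow> E y x" using G graph_sym by metis

lemma n4: "n \<ge> 4" using H unfolding is_hole_def by blast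
lemma Cne[simp]: "C \<noteq> []" using n4 by auto
lemma dC: "distinct C" using H unfolding is_hole_def by blast
lemma CV: "set C \<subseteq> V" using H unfolding is_hole_def by blast
lemma CnV: "t < n \<Longrightarrow> C!t \<in> V" using CV by auto

lemma Cinj: "s < n \<Longrightarrow> t < n \<Longrightarrow> C!s = C!t \<longleftrightarrow> s = t"
  using dC nth_eq_iff_index_eq by blast

lemma mem_seg: "b < n \<Longrightarrow> t < n \<Longrightarrow> C!t \<in> set (seg C a b) \<longleftrightarrow> a \<le> t \<and> t \<le> b"
  unfolding seg_set using Cinj by auto

lemma ECC: "s < n \<Longrightarrow> t < n \<Longrightarrow> E (C!s) (C!t) \<Longrightarrow>
    s = t+1 \<or> t = s+1 \<or> (s = 0 \<and> t = n-1) \<or> (t = 0 \<and> s = n-1)"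
  using hole_adj[OF G H] by blast

lemma ECCi: "s < n \<Longrightarrow> t < n \<Longrightarrow> (s = t+1 \<or> t = s+1 \<or> (s = 0 \<and> t = n-1) \<or> (t = 0 \<and> s = n-1))
   \<Longrightarrow> E (C!s) (C!t)"
  using hole_adj[OF G H] by blast

lemma noECC: "s < n \<Longrightarrow> t < n \<Longrightarrow> \<not>(s = t+1 \<or> t = s+1 \<or> (s = 0 \<and> t = n-1) \<or> (t = 0 \<and> s = n-1))
   \<Longrightarrow> \<not> E (C!s) (C!t)"
  using ECC by blast

lemma sdisj: "b < c \<Longrightarrow> d < n \<Longrightarrow> set (seg C a b) \<inter> set (seg C c d) = {}"
  unfolding seg_set using dC by (auto simp: nth_eq_iff_index_eq)

lemma seg_cons_snoc: "a < b \<Longrightarrow> seg C a b = C!a # seg C (Suc a) (b - 1) @ [C!b]"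
proof -
  assume ab: "a < b"
  have "seg C a b = C!a # seg C (Suc a) b" using seg_cons[of a b C] ab by simp
  moreover have "seg C (Suc a) b = seg C (Suc a) (b-1) @ [C!b]" using ab seg_snoc[of "Suc a" "b-1" C] by simp
  ultimately show ?thesis by simp
qed

lemma BW_path: "2 \<le> y \<Longrightarrow> y < n \<Longrightarrow> is_path V E (seg C y (n-1) @ [C!0])"
proof -
  assume y: "2 \<le> y" "y < n"
  show ?thesis
  proof (rule path_snoc[OF G seg_path[OF G H]])
    show "y \<le> n - 1" "n - 1 < n" "\<not> (y = 0 \<and> n - 1 = n - 1)" using y by auto
    show "C!0 \<in> V" using CnV[of 0] n4 by linarith
    show "C!0 \<notin> set (seg C y (n-1))" using y n4 by (simp add: mem_seg)
    show "E (last (seg C y (n - 1))) (C ! 0)" using y n4 ECCi[of "n-1" 0] by simp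
    show "\<forall>a\<in>set (seg C y (n - 1)). E a (C ! 0) \<longrightarrow> a = last (seg C y (n - 1))"
      unfolding ball_seg
    proof (intro allI impI)
      fix t assume t: "y \<le> t \<and> t \<le> n - 1" and e: "E (C!t) (C!0)"
      have "t = n - 1" using ECC[of t 0] e t y n4 by auto
      then show "C!t = last (seg C y (n-1))" using t by simp
    qed
  qed
qed

end

locale norm = hol +
  fixes P u v and x2 y1 y2 :: nat
  assumes PP: "is_path V E P" and lenP: "length P \<ge> 2"
   and hdP: "hd P = u" and lastP: "last P = v" and disj: "set P \<inter> set C = {}"
   and int: "\<forall>q\<in>set P. q \<noteq> u \<longrightarrow> q \<noteq> v \<longrightarrow> (\<forall>w\<in>set C. \<not> E q w)"
   and pos: "x2 < y1" "y1 \<le> y2" "y2 < length C"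
   and Xb: "\<forall>t<length C. E u (C!t) \<longrightarrow> t \<le> x2" and X0: "E u (C!0)" and Xx2: "E u (C!x2)"
   and Yb: "\<forall>t<length C. E v (C!t) \<longrightarrow> y1 \<le> t \<and> t \<le> y2" and Yy1: "E v (C!y1)" and Yy2: "E v (C!y2)"
begin



lemma PV: "set P \<subseteq> V" using PP unfolding is_path_def by blast
lemma dP: "distinct P" using PP unfolding is_path_def by blast
lemma Pne: "P \<noteq> []" using PP unfolding is_path_def by blast


lemma uP: "u \<in> set P" using hdP Pne by auto
lemma vP: "v \<in> set P" using lastP Pne by auto
lemma uC: "u \<notin> set C" using uP disj by auto
lemma vC: "v \<notin> set C" using vP disj by auto
lemma uV: "u \<in> V" using uP PV by auto
lemma vV: "v \<in> V" using vP PV by auto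
lemma uv: "u \<noteq> v"
proof
  assume "u = v"
  then have "P!0 = P!(length P - 1)" using hdP lastP Pne by (simp add: hd_conv_nth last_conv_nth)
  moreover have "0 < length P" "length P - 1 < length P" "0 \<noteq> length P - 1" using lenP by auto
  ultimately show False using nth_eq_iff_index_eq[OF dP, of 0 "length P - 1"] by blast
qed

lemma CPnot: "t < n \<Longrightarrow> C!t \<notin> set P" using disj by auto

lemma pc_edge: "q \<in> set P \<Longrightarrow> t < n \<Longrightarrow> E q (C!t) \<Longrightarrow>
    (q = u \<and> t \<le> x2) \<or> (q = v \<and> y1 \<le> t \<and> t \<le> y2)"
  using int Xb Yb by auto

lemma cp_edge: "q \<in> set P \<Longrightarrow> t < n \<Longrightarrow> E (C!t) q \<Longrightarrow>
    (q = u \<and> t \<le> x2) \<or> (q = v \<and> y1 \<le> t \<and> t \<le> y2)"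
  using pc_edge sym by blast

lemma Pdec: "P = butlast P @ [v]"
proof -
  have "butlast P @ [last P] = P" using Pne by simp
  then show ?thesis using lastP by simp
qed
lemma Pdec2: "P = u # tl P" using Pne hdP by (cases P) auto
lemma blP: "butlast P \<noteq> []" using lenP by (cases P) auto
lemma vnbl: "v \<notin> set (butlast P)" using dP Pdec by (metis distinct_append disjoint_iff_not_equal list.set_intros(1))
lemma blsub: "set (butlast P) \<subseteq> set P" by (meson in_set_butlastD subsetI)


end


context norm begin

lemma segP: "b < n \<Longrightarrow> set (seg C a b) \<inter> set P = {}"
  using disj unfolding seg_set by auto

lemma noCP: "q \<in> set P \<Longrightarrow> t < n \<Longrightarrow> \<not>((q = u \<and> t \<le> x2) \<or> (q = v \<and> y1 \<le> t \<and> t \<le> y2))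
   \<Longrightarrow> \<not> E (C!t) q"
  using cp_edge by blast

lemma caseL1R1:
  assumes a: "x2 = 0" "y1 = y2" "y1 \<noteq> 1" "y1 \<noteq> n - 1"
  shows "has_theta V E"
proof -
  let ?y = y1
  have y: "2 \<le> ?y" "?y \<le> n - 2" "?y < n" using a pos by auto
  have Q1: "is_path V E (C!0 # seg C 1 (?y-1) @ [C!?y])"
    using seg_path[OF G H, of 0 ?y] seg_cons_snoc[of 0 ?y] y by simp
  have e2: "C!0 # rev (seg C (Suc ?y) (n-1)) @ [C!?y] = rev (seg C ?y (n-1) @ [C!0])"
    using seg_cons[of ?y "n-1" C] y by simp
  have Q2: "is_path V E (C!0 # rev (seg C (Suc ?y) (n-1)) @ [C!?y])"
    unfolding e2 using rev_path[OF G BW_path[of ?y]] y by simp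
  have P1: "is_path V E (P @ [C!?y])"
  proof (rule path_snoc[OF G PP])
    show "C!?y \<in> V" using CnV y by simp
    show "C!?y \<notin> set P" using CPnot y by simp
    show "E (last P) (C!?y)" using lastP Yy1 by simp
    show "\<forall>a\<in>set P. E a (C!?y) \<longrightarrow> a = last P" using pc_edge y a lastP by fastforce
  qed
  have Q3: "is_path V E (C!0 # P @ [C!?y])"
  proof (rule path_cons[OF G P1])
    show "C!0 \<in> V" using CnV[of 0] n4 by linarith
    show "C!0 \<notin> set (P @ [C!?y])" using CPnot[of 0] Cinj[of 0 ?y] y by auto
    show "E (C!0) (hd (P @ [C!?y]))" using hdP Pne X0 sym by simp
    show "\<forall>b\<in>set (P @ [C!?y]). E (C!0) b \<longrightarrow> b = hd (P @ [C!?y])"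
    proof (intro ballI impI)
      fix b assume b: "b \<in> set (P @ [C!?y])" and e: "E (C!0) b"
      show "b = hd (P @ [C!?y])"
      proof (cases "b \<in> set P")
        case True then show ?thesis using cp_edge[of b 0] e a y hdP Pne by auto
      next
        case False then have "b = C!?y" using b by simp
        then show ?thesis using ECC[of 0 ?y] e y a by auto
      qed
    qed
  qed
  show ?thesis
  proof (rule theta_intro[OF G _ Q1 Q2 Q3])
    show "\<not> E (C!0) (C!?y)" using ECC[of 0 ?y] y a by auto
    show "seg C 1 (?y-1) \<noteq> []" "rev (seg C (Suc ?y) (n-1)) \<noteq> []" "P \<noteq> []" using y Pne by auto
    show "set (seg C 1 (?y-1)) \<inter> set (rev (seg C (Suc ?y) (n-1))) = {}" using sdisj y by simp
    show "set (seg C 1 (?y-1)) \<inter> set P = {}" "set (rev (seg C (Suc ?y) (n-1))) \<inter> set P = {}"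
      using segP y by auto
    show "\<forall>p\<in>set (seg C 1 (?y-1)). \<forall>q\<in>set (rev (seg C (Suc ?y) (n-1))). \<not> E p q"
      unfolding set_rev ball_seg
    proof (intro allI impI)
      fix s t assume s: "1 \<le> s \<and> s \<le> ?y - 1" and t: "Suc ?y \<le> t \<and> t \<le> n - 1"
      show "\<not> E (C!s) (C!t)" by (rule noECC) (use s t y in auto)
    qed
    show "\<forall>p\<in>set (seg C 1 (?y-1)). \<forall>q\<in>set P. \<not> E p q"
      unfolding ball_seg
    proof (intro allI impI ballI)
      fix t q assume t: "1 \<le> t \<and> t \<le> ?y - 1" and q: "q \<in> set P"
      show "\<not> E (C!t) q" by (rule noCP[OF q]) (use t a y in auto)
    qed
    show "\<forall>p\<in>set (rev (seg C (Suc ?y) (n-1))). \<forall>q\<in>set P. \<not> E p q"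
      unfolding set_rev ball_seg
    proof (intro allI impI ballI)
      fix t q assume t: "Suc ?y \<le> t \<and> t \<le> n - 1" and q: "q \<in> set P"
      show "\<not> E (C!t) q" by (rule noCP[OF q]) (use t a y in auto)
    qed
  qed
qed

end


context norm begin

lemma caseL1R2:
  assumes a: "x2 = 0" "y2 = Suc y1"
  shows "has_pyramid V E"
proof -
  have y: "1 \<le> y1" "y2 \<le> n - 1" "y1 < n" "y2 < n" using a pos by auto
  have Q1: "is_path V E (C!0 # seg C 1 y1)"
    using seg_path[OF G H, of 0 y1] seg_cons[of 0 y1 C] y a by simp
  have Q2: "is_path V E (C!0 # rev (seg C y2 (n-1)))"
    using rev_path[OF G BW_path[of y2]] y a by simp
  have Q3: "is_path V E (C!0 # P)"
  proof (rule path_cons[OF G PP])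
    show "C!0 \<in> V" using CnV[of 0] n4 by linarith
    show "C!0 \<notin> set P" using CPnot[of 0] n4 by auto
    show "E (C!0) (hd P)" using hdP X0 sym by simp
    show "\<forall>b\<in>set P. E (C!0) b \<longrightarrow> b = hd P"
    proof (intro ballI impI)
      fix b assume b: "b \<in> set P" and e: "E (C!0) b"
      show "b = hd P" using cp_edge[of b 0, OF b _ e] a y hdP by auto
    qed
  qed
  have lr1: "last (seg C 1 y1) = C!y1" and lr2: "last (rev (seg C y2 (n-1))) = C!y2"
    using y by (simp_all add: last_rev)
  show ?thesis
  proof (rule pyramid_intro[OF G Q1 Q2 Q3])
    show "seg C 1 y1 \<noteq> []" "rev (seg C y2 (n-1)) \<noteq> []" "P \<noteq> []" using y Pne by auto
    show "E (last (seg C 1 y1)) (last (rev (seg C y2 (n - 1))))"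
      unfolding lr1 lr2 by (rule ECCi) (use y a in auto)
    show "E (last (seg C 1 y1)) (last P)" unfolding lr1 using Yy1 sym lastP by simp
    show "E (last (rev (seg C y2 (n - 1)))) (last P)" unfolding lr2 using Yy2 sym lastP by simp
    show "set (seg C 1 y1) \<inter> set (rev (seg C y2 (n - 1))) = {}" using sdisj y a by simp
    show "set (seg C 1 y1) \<inter> set P = {}" "set (rev (seg C y2 (n - 1))) \<inter> set P = {}"
      using segP y by auto
    show "\<forall>p\<in>set (seg C 1 y1). \<forall>q\<in>set (rev (seg C y2 (n - 1))).
        E p q \<longrightarrow> p = last (seg C 1 y1) \<and> q = last (rev (seg C y2 (n - 1)))"
      unfolding lr1 lr2 set_rev ball_seg
    proof (intro allI impI)
      fix s t assume s: "1 \<le> s \<and> s \<le> y1" and t: "y2 \<le> t \<and> t \<le> n - 1" and e: "E (C!s) (C!t)"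
      have "s < n" "t < n" using s t y by auto
      from ECC[OF this e] have "s = y1 \<and> t = y2" using s t y a by auto
      then show "C!s = C!y1 \<and> C!t = C!y2" by simp
    qed
    show "\<forall>p\<in>set (seg C 1 y1). \<forall>q\<in>set P. E p q \<longrightarrow> p = last (seg C 1 y1) \<and> q = last P"
      unfolding lr1 ball_seg
    proof (intro allI impI ballI)
      fix s q assume s: "1 \<le> s \<and> s \<le> y1" and q: "q \<in> set P" and e: "E (C!s) q"
      have "s < n" using s y by auto
      from cp_edge[OF q this e] have "s = y1 \<and> q = v" using s a by auto
      then show "C!s = C!y1 \<and> q = last P" using lastP by simp
    qed
    show "\<forall>p\<in>set (rev (seg C y2 (n-1))). \<forall>q\<in>set P. E p q \<longrightarrow> p = last (rev (seg C y2 (n-1))) \<and> q = last P"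
      unfolding lr2 set_rev ball_seg
    proof (intro allI impI ballI)
      fix s q assume s: "y2 \<le> s \<and> s \<le> n - 1" and q: "q \<in> set P" and e: "E (C!s) q"
      have "s < n" using s y by auto
      from cp_edge[OF q this e] have "s = y2 \<and> q = v" using s a y by auto
      then show "C!s = C!y2 \<and> q = last P" using lastP by simp
    qed
    show "3 \<le> length (seg C 1 y1) + length (rev (seg C y2 (n - 1)))" using y a n4 by simp
    show "3 \<le> length (seg C 1 y1) + length P" "3 \<le> length (rev (seg C y2 (n - 1))) + length P"
      using y lenP by auto
  qed
qed

end


context norm begin

lemma segBP: "b < n \<Longrightarrow> set (seg C a b) \<inter> set (butlast P) = {}"
  using segP blsub by blast

lemma hbl: "hd (butlast P) = u"
  using hdP lenP by (cases P) auto

lemma Q0P: "x2 = 0 \<Longrightarrow> 1 \<le> y1 \<Longrightarrow> is_path V E (C!0 # P)"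
proof (rule path_cons[OF G PP])
  assume a: "x2 = 0" "1 \<le> y1"
  show "C!0 \<in> V" using CnV[of 0] n4 by linarith
  show "C!0 \<notin> set P" using CPnot[of 0] n4 by auto
  show "E (C!0) (hd P)" using hdP X0 sym by simp
  show "\<forall>b\<in>set P. E (C!0) b \<longrightarrow> b = hd P"
  proof (intro ballI impI)
    fix b assume b: "b \<in> set P" and e: "E (C!0) b"
    show "b = hd P" using cp_edge[of b 0, OF b _ e] a hdP n4 by auto
  qed
qed

lemma caseL1R3:
  assumes a: "x2 = 0" "Suc (Suc y1) \<le> y2"
  shows "has_theta V E"
proof -
  have y: "1 \<le> y1" "y2 \<le> n - 1" "y1 + 2 < n" "y2 < n" using a pos by auto
  have S1: "is_path V E (seg C 0 y1 @ [v])"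
  proof (rule path_snoc[OF G seg_path[OF G H]])
    show "0 \<le> y1" "y1 < n" "\<not> (0 = 0 \<and> y1 = n - 1)" using y by auto
    show "v \<in> V" "v \<notin> set (seg C 0 y1)" using vV vC y unfolding seg_set by auto
    show "E (last (seg C 0 y1)) v" using Yy1 sym by simp
    show "\<forall>a\<in>set (seg C 0 y1). E a v \<longrightarrow> a = last (seg C 0 y1)"
      unfolding ball_seg
    proof (intro allI impI)
      fix s assume s: "0 \<le> s \<and> s \<le> y1" and e: "E (C!s) v"
      have "s < n" using s y by auto
      from cp_edge[OF vP this e] have "s = y1" using s uv by auto
      then show "C!s = last (seg C 0 y1)" by simp
    qed
  qed
  have Q1: "is_path V E (C!0 # seg C 1 y1 @ [v])" using S1 seg_cons[of 0 y1 C] by simp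
  have S2: "is_path V E (rev (seg C y2 (n-1) @ [C!0]) @ [v])"
  proof (rule path_snoc[OF G rev_path[OF G BW_path]])
    show "2 \<le> y2" "y2 < n" using y a by auto
    show "v \<in> V" using vV by simp
    show "v \<notin> set (rev (seg C y2 (n - 1) @ [C ! 0]))" using vC y by (auto simp: seg_set)
    show "E (last (rev (seg C y2 (n - 1) @ [C ! 0]))) v" using Yy2 sym y by (simp add: last_rev)
    show "\<forall>a\<in>set (rev (seg C y2 (n - 1) @ [C ! 0])). E a v \<longrightarrow> a = last (rev (seg C y2 (n - 1) @ [C ! 0]))"
      unfolding set_rev set_append ball_Un ball_seg
    proof (intro conjI allI impI ballI)
      fix s assume s: "y2 \<le> s \<and> s \<le> n - 1" and e: "E (C!s) v"
      have "s < n" using s y by auto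
      from cp_edge[OF vP this e] have "s = y2" using s uv by auto
      then show "C!s = last (rev (seg C y2 (n - 1) @ [C ! 0]))" using y by (simp add: last_rev)
    next
      fix w assume "w \<in> set [C!0]" and e: "E w v"
      then have "E (C!0) v" by simp
      from cp_edge[OF vP _ this] show "w = last (rev (seg C y2 (n - 1) @ [C ! 0]))" using y uv by auto
    qed
  qed
  have Q2: "is_path V E (C!0 # rev (seg C y2 (n-1)) @ [v])" using S2 by simp
  have Q3: "is_path V E (C!0 # butlast P @ [v])" using Q0P a y Pdec by simp
  show ?thesis
  proof (rule theta_intro[OF G _ Q1 Q2 Q3])
    show "\<not> E (C!0) v" using pc_edge[OF vP, of 0] sym uv y by auto
    show "seg C 1 y1 \<noteq> []" "rev (seg C y2 (n-1)) \<noteq> []" "butlast P \<noteq> []" using y blP by auto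
    show "set (seg C 1 y1) \<inter> set (rev (seg C y2 (n-1))) = {}" using sdisj y a by simp
    show "set (seg C 1 y1) \<inter> set (butlast P) = {}" "set (rev (seg C y2 (n-1))) \<inter> set (butlast P) = {}"
      using segBP y by auto
    show "\<forall>p\<in>set (seg C 1 y1). \<forall>q\<in>set (rev (seg C y2 (n-1))). \<not> E p q"
      unfolding set_rev ball_seg
    proof (intro allI impI)
      fix s t assume s: "1 \<le> s \<and> s \<le> y1" and t: "y2 \<le> t \<and> t \<le> n - 1"
      show "\<not> E (C!s) (C!t)" by (rule noECC) (use s t y a in auto)
    qed
    show "\<forall>p\<in>set (seg C 1 y1). \<forall>q\<in>set (butlast P). \<not> E p q"
      unfolding ball_seg
    proof (intro allI impI ballI)
      fix t q assume t: "1 \<le> t \<and> t \<le> y1" and q: "q \<in> set (butlast P)"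
      show "\<not> E (C!t) q" by (rule noCP) (use t a y q blsub vnbl in auto)
    qed
    show "\<forall>p\<in>set (rev (seg C y2 (n-1))). \<forall>q\<in>set (butlast P). \<not> E p q"
      unfolding set_rev ball_seg
    proof (intro allI impI ballI)
      fix t q assume t: "y2 \<le> t \<and> t \<le> n - 1" and q: "q \<in> set (butlast P)"
      show "\<not> E (C!t) q" by (rule noCP) (use t a y q blsub vnbl in auto)
    qed
  qed
qed


lemma caseL2R2:
  assumes a: "x2 = 1" "y2 = Suc y1"
  shows "has_prism V E"
proof -
  have y: "2 \<le> y1" "y2 \<le> n - 1" "y1 < n" "y2 < n" "3 \<le> y2" using a pos by auto
  let ?Q1 = "seg C 1 y1" and ?Q2 = "rev (seg C y2 (n-1) @ [C!0])"
  have Q1: "is_path V E ?Q1" using seg_path[OF G H, of 1 y1] y by simp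
  have Q2: "is_path V E ?Q2" using rev_path[OF G BW_path[of y2]] y by simp
  have h: "hd ?Q1 = C!1" "last ?Q1 = C!y1" "hd ?Q2 = C!0" "last ?Q2 = C!y2" "hd P = u" "last P = v"
    using y hdP lastP by (simp_all add: hd_rev last_rev)
  have u1: "E u (C!1)" using Xx2 a by simp
  show ?thesis
  proof (rule prism_intro[OF G Q1 Q2 PP], unfold h)
    show "E (C!1) (C!0)" by (rule ECCi) (use n4 in auto)
    show "E (C!1) u" "E (C!0) u" using u1 X0 sym by auto
    show "E (C!y1) (C!y2)" by (rule ECCi) (use y a in auto)
    show "E (C!y1) v" "E (C!y2) v" using Yy1 Yy2 sym by auto
    show "{C!1, C!0, u} \<inter> {C!y1, C!y2, v} = {}"
      using Cinj[of 1 y1] Cinj[of 1 y2] Cinj[of 0 y1] Cinj[of 0 y2] y n4 uv uC vC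
      by (auto simp: in_set_conv_nth)
    have dd: "set (seg C 1 y1) \<inter> set (seg C y2 (n-1)) = {}" by (rule sdisj) (use y a in auto)
    show "set ?Q1 \<inter> set ?Q2 = {}" using dd mem_seg[of y1 0 1] y by auto
    show "set ?Q1 \<inter> set P = {}" "set ?Q2 \<inter> set P = {}" using segP y CPnot[of 0] by auto
    show "\<forall>p\<in>set ?Q1. \<forall>q\<in>set ?Q2. E p q \<longrightarrow> p = C!1 \<and> q = C!0 \<or> p = C!y1 \<and> q = C!y2"
      unfolding set_rev set_append ball_Un ball_seg
    proof (intro allI impI conjI ballI)
      fix s t assume s: "1 \<le> s \<and> s \<le> y1" and t: "y2 \<le> t \<and> t \<le> n - 1" and e: "E (C!s) (C!t)"
      have "s < n" "t < n" using s t y by auto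
      from ECC[OF this e] have "s = y1 \<and> t = y2" using s t y a by auto
      then show "C!s = C!1 \<and> C!t = C!0 \<or> C!s = C!y1 \<and> C!t = C!y2" by simp
    next
      fix s w assume s: "1 \<le> s \<and> s \<le> y1" and w: "w \<in> set [C!0]" and e: "E (C!s) w"
      have "s < n" "0 < n" using s y by auto
      from ECC[OF this] e w have "s = 1" using s y a by auto
      then show "C!s = C!1 \<and> w = C!0 \<or> C!s = C!y1 \<and> w = C!y2" using w by simp
    qed
    show "\<forall>p\<in>set ?Q1. \<forall>q\<in>set P. E p q \<longrightarrow> p = C!1 \<and> q = u \<or> p = C!y1 \<and> q = v"
      unfolding ball_seg
    proof (intro allI impI ballI)
      fix s q assume s: "1 \<le> s \<and> s \<le> y1" and q: "q \<in> set P" and e: "E (C!s) q"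
      have "s < n" using s y by auto
      from cp_edge[OF q this e] have "(s = 1 \<and> q = u) \<or> (s = y1 \<and> q = v)" using s a by auto
      then show "C!s = C!1 \<and> q = u \<or> C!s = C!y1 \<and> q = v" by auto
    qed
    show "\<forall>p\<in>set ?Q2. \<forall>q\<in>set P. E p q \<longrightarrow> p = C!0 \<and> q = u \<or> p = C!y2 \<and> q = v"
      unfolding set_rev set_append ball_Un ball_seg
    proof (intro allI impI conjI ballI)
      fix s q assume s: "y2 \<le> s \<and> s \<le> n - 1" and q: "q \<in> set P" and e: "E (C!s) q"
      have "s < n" using s y by auto
      from cp_edge[OF q this e] have "s = y2 \<and> q = v" using s a y by auto
      then show "C!s = C!0 \<and> q = u \<or> C!s = C!y2 \<and> q = v" by auto
    next
      fix w q assume w: "w \<in> set [C!0]" and q: "q \<in> set P" and e: "E w q"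
      have "E (C!0) q" using w e by simp
      from cp_edge[OF q _ this] have "q = u" using y by auto
      then show "w = C!0 \<and> q = u \<or> w = C!y2 \<and> q = v" using w by simp
    qed
  qed
qed

lemma caseL2R3:
  assumes a: "x2 = 1" "Suc (Suc y1) \<le> y2"
  shows "has_pyramid V E"
proof -
  have y: "2 \<le> y1" "y2 \<le> n - 1" "y1 + 2 < n" "y2 < n" "4 \<le> y2" using a pos by auto
  let ?R1 = "rev (seg C 1 y1)" and ?R2 = "seg C y2 (n-1) @ [C!0]" and ?R3 = "rev (butlast P)"
  have S1: "is_path V E (seg C 1 y1 @ [v])"
  proof (rule path_snoc[OF G seg_path[OF G H]])
    show "1 \<le> y1" "y1 < n" "\<not> (1 = 0 \<and> y1 = n - 1)" using y by auto
    show "v \<in> V" "v \<notin> set (seg C 1 y1)" using vV vC y by (auto simp: seg_set)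
    show "E (last (seg C 1 y1)) v" using Yy1 sym y by simp
    show "\<forall>a\<in>set (seg C 1 y1). E a v \<longrightarrow> a = last (seg C 1 y1)"
      unfolding ball_seg
    proof (intro allI impI)
      fix s assume s: "1 \<le> s \<and> s \<le> y1" and e: "E (C!s) v"
      have "s < n" using s y by auto
      from cp_edge[OF vP this e] have "s = y1" using s uv by auto
      then show "C!s = last (seg C 1 y1)" using y by simp
    qed
  qed
  have Q1: "is_path V E (v # ?R1)" using rev_path[OF G S1] by simp
  have Q2: "is_path V E (v # ?R2)"
  proof (rule path_cons[OF G BW_path])
    show "2 \<le> y2" "y2 < n" using y by auto
    show "v \<in> V" using vV by simp
    show "v \<notin> set ?R2" using vC y by (auto simp: seg_set)
    show "E v (hd ?R2)" using Yy2 y by simp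
    show "\<forall>b\<in>set ?R2. E v b \<longrightarrow> b = hd ?R2"
      unfolding set_append ball_Un ball_seg
    proof (intro allI impI conjI ballI)
      fix s assume s: "y2 \<le> s \<and> s \<le> n - 1" and e: "E v (C!s)"
      have "s < n" using s y by auto
      from pc_edge[OF vP this e] have "s = y2" using s uv by auto
      then show "C!s = hd ?R2" using y by simp
    next
      fix w assume w: "w \<in> set [C!0]" and e: "E v w"
      have "E v (C!0)" using w e by simp
      from pc_edge[OF vP _ this] have False using y uv by auto
      then show "w = hd ?R2" by simp
    qed
  qed
  have Q3: "is_path V E (v # ?R3)"
  proof -
    have "v # ?R3 = rev P" using Pdec by (metis rev.simps(2) rev_rev_ident)
    then show ?thesis using rev_path[OF G PP] by simp
  qed
  have l: "last ?R1 = C!1" "last ?R2 = C!0" "last ?R3 = u"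
    using y blP hdP Pdec2 by (simp_all add: last_rev hbl)
  show ?thesis
  proof (rule pyramid_intro[OF G Q1 Q2 Q3], unfold l)
    show "?R1 \<noteq> []" "?R2 \<noteq> []" "?R3 \<noteq> []" using y blP by auto
    show "E (C!1) (C!0)" by (rule ECCi) (use n4 in auto)
    show "E (C!1) u" "E (C!0) u" using Xx2 a X0 sym by auto
    have dd: "set (seg C 1 y1) \<inter> set (seg C y2 (n-1)) = {}" by (rule sdisj) (use y a in auto)
    show "set ?R1 \<inter> set ?R2 = {}" using dd mem_seg[of y1 0 1] y by auto
    show "set ?R1 \<inter> set ?R3 = {}" "set ?R2 \<inter> set ?R3 = {}"
      using segBP y CPnot[of 0] blsub by auto
    show "\<forall>p\<in>set ?R1. \<forall>q\<in>set ?R2. E p q \<longrightarrow> p = C!1 \<and> q = C!0"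
      unfolding set_rev set_append ball_Un ball_seg
    proof (intro allI impI conjI ballI)
      fix s t assume s: "1 \<le> s \<and> s \<le> y1" and t: "y2 \<le> t \<and> t \<le> n - 1" and e: "E (C!s) (C!t)"
      have "s < n" "t < n" using s t y by auto
      from ECC[OF this e] have False using s t y a by auto
      then show "C!s = C!1" "C!t = C!0" by simp_all
    next
      fix s w assume s: "1 \<le> s \<and> s \<le> y1" and w: "w \<in> set [C!0]" and e: "E (C!s) w"
      have "s < n" "0 < n" using s y by auto
      from ECC[OF this] e w have "s = 1" using s y by auto
      then show "C!s = C!1" "w = C!0" using w by simp_all
    qed
    show "\<forall>p\<in>set ?R1. \<forall>q\<in>set ?R3. E p q \<longrightarrow> p = C!1 \<and> q = u"
      unfolding set_rev ball_seg
    proof (intro allI impI ballI)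
      fix s q assume s: "1 \<le> s \<and> s \<le> y1" and q: "q \<in> set (butlast P)" and e: "E (C!s) q"
      have "s < n" using s y by auto
      from cp_edge[OF _ this e] q blsub vnbl have "s = 1 \<and> q = u" using s a by auto
      then show "C!s = C!1 \<and> q = u" by auto
    qed
    show "\<forall>p\<in>set ?R2. \<forall>q\<in>set ?R3. E p q \<longrightarrow> p = C!0 \<and> q = u"
      unfolding set_rev set_append ball_Un ball_seg
    proof (intro allI impI conjI ballI)
      fix s q assume s: "y2 \<le> s \<and> s \<le> n - 1" and q: "q \<in> set (butlast P)" and e: "E (C!s) q"
      have "s < n" using s y by auto
      from cp_edge[OF _ this e] q blsub vnbl have False using s a y by auto
      then show "C!s = C!0" "q = u" by simp_all
    next
      fix w q assume w: "w \<in> set [C!0]" and q: "q \<in> set (butlast P)" and e: "E w q"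
      have "E (C!0) q" using w e by simp
      from cp_edge[OF _ _ this] q blsub vnbl have "q = u" using y by auto
      then show "w = C!0" "q = u" using w by simp_all
    qed
    show "3 \<le> length ?R1 + length ?R2" "3 \<le> length ?R1 + length ?R3" "3 \<le> length ?R2 + length ?R3"
      using y lenP by auto
  qed
qed

end


context hol begin

lemma path3:
  assumes w: "w \<in> V" "w \<notin> set C" and ab: "a < n" "b < n" "a \<noteq> b" and e: "E w (C!a)" "E w (C!b)"
    and nab: "\<not> E (C!a) (C!b)"
  shows "is_path V E [C!a, w, C!b]"
proof -
  have p1: "is_path V E ([w] @ [C!b])"
  proof (rule path_glue[OF G single_path[OF w(1) G] single_path[OF CnV[OF ab(2)] G]])
    show "set [w] \<inter> set [C!b] = {}" using w ab by auto
  qed (use e in auto)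
  have "is_path V E ([C!a] @ ([w] @ [C!b]))"
  proof (rule path_glue[OF G single_path[OF CnV[OF ab(1)] G] p1])
    show "set [C!a] \<inter> set ([w] @ [C!b]) = {}" using w ab Cinj by auto
  qed (use e nab sym in auto)
  then show ?thesis by simp
qed

lemma caseA0:
  assumes w: "w \<in> V" "w \<notin> set C" and nb: "\<forall>t<n. E w (C!t) \<longrightarrow> t = 0 \<or> t = k"
    and e: "E w (C!0)" "E w (C!k)" and k: "2 \<le> k" "k \<le> n - 2"
  shows "has_theta V E"
proof -
  have k': "k < n" "0 < n" using k n4 by auto
  have nab: "\<not> E (C!0) (C!k)" by (rule noECC) (use k n4 in auto)
  have Q1: "is_path V E (C!0 # [w] @ [C!k])" using path3[OF w k'(2) k'(1) _ e nab] k by simp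
  have Q2: "is_path V E (C!0 # seg C 1 (k-1) @ [C!k])"
    using seg_path[OF G H, of 0 k] seg_cons_snoc[of 0 k] k by simp
  have e3: "C!0 # rev (seg C (Suc k) (n-1)) @ [C!k] = rev (seg C k (n-1) @ [C!0])"
    using seg_cons[of k "n-1" C] k by simp
  have Q3: "is_path V E (C!0 # rev (seg C (Suc k) (n-1)) @ [C!k])"
    unfolding e3 using rev_path[OF G BW_path[of k]] k by simp
  show ?thesis
  proof (rule theta_intro[OF G nab Q1 Q2 Q3])
    show "[w] \<noteq> []" "seg C 1 (k-1) \<noteq> []" "rev (seg C (Suc k) (n-1)) \<noteq> []" using k by auto
    show "set [w] \<inter> set (seg C 1 (k - 1)) = {}" "set [w] \<inter> set (rev (seg C (Suc k) (n - 1))) = {}"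
      using w k by (auto simp: seg_set)
    show "set (seg C 1 (k - 1)) \<inter> set (rev (seg C (Suc k) (n - 1))) = {}" using sdisj k by simp
    show "\<forall>p\<in>set [w]. \<forall>q\<in>set (seg C 1 (k - 1)). \<not> E p q"
      unfolding ball_seg
    proof (intro allI impI ballI)
      fix p t assume p: "p \<in> set [w]" and t: "1 \<le> t \<and> t \<le> k - 1"
      have "t < n" using t k by auto
      then show "\<not> E p (C!t)" using nb p t by auto
    qed
    show "\<forall>p\<in>set [w]. \<forall>q\<in>set (rev (seg C (Suc k) (n - 1))). \<not> E p q"
      unfolding set_rev ball_seg
    proof (intro allI impI ballI)
      fix p t assume p: "p \<in> set [w]" and t: "Suc k \<le> t \<and> t \<le> n - 1"
      have "t < n" using t k by auto
      then show "\<not> E p (C!t)" using nb p t by auto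
    qed
    show "\<forall>p\<in>set (seg C 1 (k - 1)). \<forall>q\<in>set (rev (seg C (Suc k) (n - 1))). \<not> E p q"
      unfolding set_rev ball_seg
    proof (intro allI impI)
      fix s t assume s: "1 \<le> s \<and> s \<le> k - 1" and t: "Suc k \<le> t \<and> t \<le> n - 1"
      show "\<not> E (C!s) (C!t)" by (rule noECC) (use s t k in auto)
    qed
  qed
qed

lemma caseAg:
  assumes w: "w \<in> V" "w \<notin> set C" and nb: "\<forall>t<n. E w (C!t) \<longrightarrow> t = i \<or> t = j"
    and e: "E w (C!i)" "E w (C!j)" and ij: "1 \<le> i" "i + 2 \<le> j" "j \<le> n - 1"
  shows "has_theta V E"
proof -
  have ij': "i < n" "j < n" "i \<noteq> j" using ij n4 by auto
  have nab: "\<not> E (C!i) (C!j)" by (rule noECC) (use ij n4 in auto)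
  have Q1: "is_path V E (C!i # [w] @ [C!j])" using path3[OF w ij' e nab] by simp
  have Q2: "is_path V E (C!i # seg C (Suc i) (j-1) @ [C!j])"
    using seg_path[OF G H, of i j] seg_cons_snoc[of i j] ij by simp
  have S: "is_path V E (seg C j (n-1) @ seg C 0 i)"
  proof (rule path_glue[OF G seg_path[OF G H] seg_path[OF G H]])
    show "j \<le> n - 1" "n - 1 < n" "\<not> (j = 0 \<and> n - 1 = n - 1)" "0 \<le> i" "i < n" "\<not> (0 = 0 \<and> i = n - 1)"
      using ij by auto
    have "set (seg C 0 i) \<inter> set (seg C j (n - 1)) = {}" by (rule sdisj) (use ij in auto)
    then show "set (seg C j (n - 1)) \<inter> set (seg C 0 i) = {}" by auto
    show "E (last (seg C j (n - 1))) (hd (seg C 0 i))" using ij by simp (rule ECCi, use n4 in auto)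
    show "\<forall>a\<in>set (seg C j (n - 1)). \<forall>b\<in>set (seg C 0 i). E a b \<longrightarrow> a = last (seg C j (n - 1)) \<and> b = hd (seg C 0 i)"
      unfolding ball_seg
    proof (intro allI impI)
      fix s t assume s: "j \<le> s \<and> s \<le> n - 1" and t: "0 \<le> t \<and> t \<le> i" and ee: "E (C!s) (C!t)"
      have "s < n" "t < n" using s t ij by auto
      from ECC[OF this ee] have "s = n - 1 \<and> t = 0" using s t ij by auto
      then show "C!s = last (seg C j (n - 1)) \<and> C!t = hd (seg C 0 i)" using ij by simp
    qed
  qed
  have e3: "C!i # rev (seg C (Suc j) (n-1) @ seg C 0 (i-1)) @ [C!j] = rev (seg C j (n-1) @ seg C 0 i)"
  proof -
    have "seg C j (n-1) = C!j # seg C (Suc j) (n-1)" using seg_cons[of j "n-1" C] ij by simp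
    moreover have "seg C 0 i = seg C 0 (i-1) @ [C!i]" using seg_snoc[of 0 "i-1" C] ij by simp
    ultimately show ?thesis by simp
  qed
  have Q3: "is_path V E (C!i # rev (seg C (Suc j) (n-1) @ seg C 0 (i-1)) @ [C!j])"
    unfolding e3 using rev_path[OF G S] .
  show ?thesis
  proof (rule theta_intro[OF G nab Q1 Q2 Q3])
    show "[w] \<noteq> []" "seg C (Suc i) (j-1) \<noteq> []" "rev (seg C (Suc j) (n-1) @ seg C 0 (i-1)) \<noteq> []" using ij by auto
    show "set [w] \<inter> set (seg C (Suc i) (j - 1)) = {}" "set [w] \<inter> set (rev (seg C (Suc j) (n - 1) @ seg C 0 (i - 1))) = {}"
      using w ij by (auto simp: seg_set)
    have d1: "set (seg C 0 (i-1)) \<inter> set (seg C (Suc i) (j - 1)) = {}" by (rule sdisj) (use ij in auto)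
    have d2: "set (seg C (Suc i) (j - 1)) \<inter> set (seg C (Suc j) (n-1)) = {}" by (rule sdisj) (use ij in auto)
    show "set (seg C (Suc i) (j - 1)) \<inter> set (rev (seg C (Suc j) (n - 1) @ seg C 0 (i - 1))) = {}"
      using d1 d2 by auto
    show "\<forall>p\<in>set [w]. \<forall>q\<in>set (seg C (Suc i) (j - 1)). \<not> E p q"
      unfolding ball_seg
    proof (intro allI impI ballI)
      fix p t assume p: "p \<in> set [w]" and t: "Suc i \<le> t \<and> t \<le> j - 1"
      have "t < n" using t ij by auto
      then show "\<not> E p (C!t)" using nb p t by auto
    qed
    show "\<forall>p\<in>set [w]. \<forall>q\<in>set (rev (seg C (Suc j) (n - 1) @ seg C 0 (i - 1))). \<not> E p q"
      unfolding set_rev set_append ball_Un ball_seg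
    proof (intro allI impI ballI conjI)
      fix p t assume p: "p \<in> set [w]" and t: "Suc j \<le> t \<and> t \<le> n - 1"
      have "t < n" using t ij by auto
      then show "\<not> E p (C!t)" using nb p t ij by auto
    next
      fix p t assume p: "p \<in> set [w]" and t: "0 \<le> t \<and> t \<le> i - 1"
      have "t < n" using t ij by auto
      then show "\<not> E p (C!t)" using nb p t ij by auto
    qed
    show "\<forall>p\<in>set (seg C (Suc i) (j - 1)). \<forall>q\<in>set (rev (seg C (Suc j) (n - 1) @ seg C 0 (i - 1))). \<not> E p q"
      unfolding set_rev set_append ball_Un ball_seg
    proof (intro allI impI conjI)
      fix s t assume s: "Suc i \<le> s \<and> s \<le> j - 1" and t: "Suc j \<le> t \<and> t \<le> n - 1"
      show "\<not> E (C!s) (C!t)" by (rule noECC) (use s t ij in auto)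
    next
      fix s t assume s: "Suc i \<le> s \<and> s \<le> j - 1" and t: "0 \<le> t \<and> t \<le> i - 1"
      show "\<not> E (C!s) (C!t)" by (rule noECC) (use s t ij in auto)
    qed
  qed
qed

end


context norm begin

lemma Pform: "P = u # tl (butlast P) @ [v]"
proof -
  have e1: "butlast P = u # tl (butlast P)" using blP hbl by (cases "butlast P") auto
  show ?thesis using Pdec e1 by (metis append_Cons)
qed

lemma midP: "q \<in> set (tl (butlast P)) \<Longrightarrow> q \<in> set P \<and> q \<noteq> u \<and> q \<noteq> v"
proof -
  assume q: "q \<in> set (tl (butlast P))"
  have d: "distinct (u # tl (butlast P) @ [v])" using dP Pform by metis
  have "q \<in> set P" using q Pform by (metis Un_iff list.set_intros(2) set_append)
  then show ?thesis using d q by auto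
qed

lemma caseL3R3long:
  assumes a: "2 \<le> x2" "Suc (Suc y1) \<le> y2" and lP: "3 \<le> length P"
  shows "has_theta V E"
proof -
  have y: "y2 \<le> n - 1" "y1 + 2 < n" "y2 < n" "x2 < n" "3 \<le> y1" "2 \<le> y2" using a pos by auto
  have nuv: "\<not> E u v"
  proof -
    have "E (P!0) (P!(length P - 1)) = (0 = length P - 1 + 1 \<or> length P - 1 = 0 + 1)"
      using path_H[OF PP, of 0 "length P - 1"] lP Pne by simp
    moreover have "P!0 = u" "P!(length P - 1) = v" using hdP lastP Pne by (simp_all add: hd_conv_nth last_conv_nth)
    ultimately show ?thesis using lP by auto
  qed
  have S1: "is_path V E (seg C x2 y1 @ [v])"
  proof (rule path_snoc[OF G seg_path[OF G H]])
    show "x2 \<le> y1" "y1 < n" "\<not> (x2 = 0 \<and> y1 = n - 1)" using y a pos by auto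
    show "v \<in> V" "v \<notin> set (seg C x2 y1)" using vV vC y by (auto simp: seg_set)
    show "E (last (seg C x2 y1)) v" using Yy1 sym pos by simp
    show "\<forall>b\<in>set (seg C x2 y1). E b v \<longrightarrow> b = last (seg C x2 y1)"
      unfolding ball_seg
    proof (intro allI impI)
      fix s assume s: "x2 \<le> s \<and> s \<le> y1" and e: "E (C!s) v"
      have "s < n" using s y by auto
      from cp_edge[OF vP this e] have "s = y1" using s uv by auto
      then show "C!s = last (seg C x2 y1)" using pos by simp
    qed
  qed
  have Q1: "is_path V E (u # seg C x2 y1 @ [v])"
  proof (rule path_cons[OF G S1])
    show "u \<in> V" "u \<notin> set (seg C x2 y1 @ [v])" using uV uC uv y by (auto simp: seg_set)
    show "E u (hd (seg C x2 y1 @ [v]))" using Xx2 pos by simp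
    show "\<forall>b\<in>set (seg C x2 y1 @ [v]). E u b \<longrightarrow> b = hd (seg C x2 y1 @ [v])"
      unfolding set_append ball_Un ball_seg
    proof (intro allI impI conjI ballI)
      fix s assume s: "x2 \<le> s \<and> s \<le> y1" and e: "E u (C!s)"
      have "s < n" using s y by auto
      from pc_edge[OF uP this e] have "s = x2" using s uv by auto
      then show "C!s = hd (seg C x2 y1 @ [v])" using pos by simp
    next
      fix b assume "b \<in> set [v]" "E u b" then show "b = hd (seg C x2 y1 @ [v])" using nuv by simp
    qed
  qed
  let ?B = "rev (seg C y2 (n-1) @ [C!0])"
  have B: "is_path V E ?B" using rev_path[OF G BW_path[of y2]] y by simp
  have hB: "hd ?B = C!0" "last ?B = C!y2" using y by (simp_all add: hd_rev last_rev)
  have S2: "is_path V E (?B @ [v])"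
  proof (rule path_snoc[OF G B])
    show "v \<in> V" "v \<notin> set ?B" using vV vC y by (auto simp: seg_set)
    show "E (last ?B) v" using Yy2 sym hB by simp
    show "\<forall>b\<in>set ?B. E b v \<longrightarrow> b = last ?B"
      unfolding hB set_rev set_append ball_Un ball_seg
    proof (intro allI impI conjI ballI)
      fix s assume s: "y2 \<le> s \<and> s \<le> n - 1" and e: "E (C!s) v"
      have "s < n" using s y by auto
      from cp_edge[OF vP this e] have "s = y2" using s uv by auto
      then show "C!s = C!y2" by simp
    next
      fix b assume b: "b \<in> set [C!0]" and e: "E b v"
      have "E (C!0) v" using b e by simp
      from cp_edge[OF vP _ this] have False using y uv by auto
      then show "b = C!y2" by simp
    qed
  qed
  have Q2: "is_path V E (u # ?B @ [v])"
  proof (rule path_cons[OF G S2])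
    show "u \<in> V" "u \<notin> set (?B @ [v])" using uV uC uv y by (auto simp: seg_set)
    show "E u (hd (?B @ [v]))" using X0 hB by simp
    show "\<forall>b\<in>set (?B @ [v]). E u b \<longrightarrow> b = hd (?B @ [v])"
      unfolding set_append ball_Un set_rev ball_seg
    proof (intro allI impI conjI ballI)
      fix s assume s: "y2 \<le> s \<and> s \<le> n - 1" and e: "E u (C!s)"
      have "s < n" using s y by auto
      from pc_edge[OF uP this e] have False using s uv a pos by auto
      then show "C!s = hd (rev (seg C y2 (n - 1) @ [C ! 0]) @ [v])" by simp
    next
      fix b assume "b \<in> set [C!0]" then show "b = hd (rev (seg C y2 (n - 1) @ [C ! 0]) @ [v])" by simp
    next
      fix b assume "b \<in> set [v]" "E u b" then show "b = hd (rev (seg C y2 (n - 1) @ [C ! 0]) @ [v])" using nuv by simp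
    qed
  qed
  have Q3: "is_path V E (u # tl (butlast P) @ [v])" using PP Pform by simp
  show ?thesis
  proof (rule theta_intro[OF G nuv Q1 Q2 Q3])
    show "seg C x2 y1 \<noteq> []" "?B \<noteq> []" using pos by auto
    show "tl (butlast P) \<noteq> []" using lP by (cases P; cases "tl P"; auto)
    have d1: "set (seg C x2 y1) \<inter> set (seg C y2 (n-1)) = {}" by (rule sdisj) (use a y in auto)
    show "set (seg C x2 y1) \<inter> set ?B = {}" using d1 mem_seg[of y1 0 x2] y a by auto
    show "set (seg C x2 y1) \<inter> set (tl (butlast P)) = {}" "set ?B \<inter> set (tl (butlast P)) = {}"
      using midP segP[of y1 x2] segP[of "n-1" y2] CPnot[of 0] y by auto
    show "\<forall>p\<in>set (seg C x2 y1). \<forall>q\<in>set ?B. \<not> E p q"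
      unfolding set_rev set_append ball_Un ball_seg
    proof (intro allI impI conjI ballI)
      fix s t assume s: "x2 \<le> s \<and> s \<le> y1" and t: "y2 \<le> t \<and> t \<le> n - 1"
      show "\<not> E (C!s) (C!t)" by (rule noECC) (use s t y a in auto)
    next
      fix s w assume s: "x2 \<le> s \<and> s \<le> y1" and w: "w \<in> set [C!0]"
      have "\<not> E (C!s) (C!0)" by (rule noECC) (use s y a in auto)
      then show "\<not> E (C!s) w" using w by simp
    qed
    show "\<forall>p\<in>set (seg C x2 y1). \<forall>q\<in>set (tl (butlast P)). \<not> E p q"
      unfolding ball_seg
    proof (intro allI impI ballI)
      fix s q assume s: "x2 \<le> s \<and> s \<le> y1" and q: "q \<in> set (tl (butlast P))"
      show "\<not> E (C!s) q" by (rule noCP) (use s y q midP in auto)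
    qed
    show "\<forall>p\<in>set ?B. \<forall>q\<in>set (tl (butlast P)). \<not> E p q"
      unfolding set_rev set_append ball_Un ball_seg
    proof (intro allI impI ballI conjI)
      fix s q assume s: "y2 \<le> s \<and> s \<le> n - 1" and q: "q \<in> set (tl (butlast P))"
      show "\<not> E (C!s) q" by (rule noCP) (use s y q midP in auto)
    next
      fix w q assume w: "w \<in> set [C!0]" and q: "q \<in> set (tl (butlast P))"
      have "\<not> E (C!0) q" by (rule noCP) (use y q midP in auto)
      then show "\<not> E w q" using w by simp
    qed
  qed
qed

end


lemma card3: "finite S \<Longrightarrow> a \<in> S \<Longrightarrow> b \<in> S \<Longrightarrow> c \<in> S \<Longrightarrow> a \<noteq> b \<Longrightarrow> a \<noteq> c \<Longrightarrow> b \<noteq> c \<Longrightarrow> 3 \<le> card S"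
proof -
  assume f: "finite S" and m: "a \<in> S" "b \<in> S" "c \<in> S" and d: "a \<noteq> b" "a \<noteq> c" "b \<noteq> c"
  have "card {a, b, c} = 3" using d by simp
  moreover have "card {a, b, c} \<le> card S" using f m by (intro card_mono) auto
  ultimately show ?thesis by simp
qed

context norm begin

lemma caseTurtle:
  assumes a: "2 \<le> x2" "Suc (Suc y1) \<le> y2" and lP: "length P = 2"
    and t0: "t0 < n" "E u (C!t0)" "t0 \<noteq> 0" "t0 \<noteq> x2"
    and t1: "t1 < n" "E v (C!t1)" "t1 \<noteq> y1" "t1 \<noteq> y2"
  shows "has_turtle V E"
proof -
  have y: "y2 \<le> n - 1" "y2 < n" "x2 < n" "Suc x2 \<le> n - 1" using a pos by auto
  have t0': "t0 \<le> x2" using Xb t0 by auto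
  have t1': "y1 \<le> t1" "t1 \<le> y2" using Yb t1 by auto
  have euv: "E u v"
  proof -
    have "E (P!0) (P!1) = (0 = 1 + 1 \<or> (1::nat) = 0 + 1)" using path_H[OF PP, of 0 1] lP by simp
    moreover have "P!0 = u" "P!1 = v" using hdP lastP Pne lP by (simp_all add: hd_conv_nth last_conv_nth)
    ultimately show ?thesis by simp
  qed
  let ?P1 = "seg C 0 x2" and ?P2 = "rev (seg C (Suc x2) (n-1))"
  have P1: "is_path V E ?P1" using seg_path[OF G H, of 0 x2] y by simp
  have P2: "is_path V E ?P2" using rev_path[OF G seg_path[OF G H, of "Suc x2" "n-1"]] y by simp
  have un: "set ?P1 \<union> set ?P2 = set C"
  proof
    show "set ?P1 \<union> set ?P2 \<subseteq> set C" using y by (auto simp: seg_set)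
    show "set C \<subseteq> set ?P1 \<union> set ?P2"
    proof
      fix x assume "x \<in> set C"
      then obtain t where t: "t < n" "x = C!t" by (metis in_set_conv_nth)
      then show "x \<in> set ?P1 \<union> set ?P2" using mem_seg[of x2 t 0] mem_seg[of "n-1" t "Suc x2"] y by auto
    qed
  qed
  have hs: "hole_set V E (set C)" unfolding hole_set_def using H by blast
  show ?thesis unfolding has_turtle_def
  proof (intro exI conjI)
    show "path_from_to V E ?P1 (C!0) (C!x2)" using P1 y by (simp add: path_from_to_def)
    show "path_from_to V E ?P2 (C!(n-1)) (C!(Suc x2))" using P2 y by (simp add: path_from_to_def hd_rev last_rev)
    show "set ?P1 \<inter> set ?P2 = {}" using sdisj[of x2 "Suc x2" "n-1" 0] y by simp
    show "E (C!0) (C!(n-1))" by (rule ECCi) (use n4 in auto)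
    show "E (C!x2) (C!(Suc x2))" by (rule ECCi) (use y in auto)
    show "hole_set V E (set ?P1 \<union> set ?P2)" using hs un by simp
    show "E u v" by (rule euv)
    show "u \<notin> set ?P1 \<union> set ?P2" "v \<notin> set ?P1 \<union> set ?P2" using un uC vC by auto
    show "3 \<le> card (nbrs E (set ?P1) u)"
    proof (rule card3)
      show "finite (nbrs E (set ?P1) u)" unfolding nbrs_def by simp
      show "C!0 \<in> nbrs E (set ?P1) u" "C!t0 \<in> nbrs E (set ?P1) u" "C!x2 \<in> nbrs E (set ?P1) u"
        unfolding nbrs_def using X0 t0 t0' Xx2 y mem_seg[of x2 0 0] mem_seg[of x2 t0 0] mem_seg[of x2 x2 0] by auto
      show "C!0 \<noteq> C!t0" "C!0 \<noteq> C!x2" "C!t0 \<noteq> C!x2" using Cinj t0 t0' a y by auto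
    qed
    show "nbrs E (set ?P2) u = {}"
    proof -
      have "\<forall>w\<in>set ?P2. \<not> E u w"
        unfolding set_rev ball_seg
      proof (intro allI impI)
        fix s assume s: "Suc x2 \<le> s \<and> s \<le> n - 1"
        then have "s < n" using y by auto
        then show "\<not> E u (C!s)" using Xb s by auto
      qed
      then show ?thesis unfolding nbrs_def by auto
    qed
    show "3 \<le> card (nbrs E (set ?P2) v)"
    proof (rule card3)
      show "finite (nbrs E (set ?P2) v)" unfolding nbrs_def by simp
      show "C!y1 \<in> nbrs E (set ?P2) v" "C!t1 \<in> nbrs E (set ?P2) v" "C!y2 \<in> nbrs E (set ?P2) v"
        unfolding nbrs_def set_rev using Yy1 Yy2 t1 t1' y pos
          mem_seg[of "n-1" y1 "Suc x2"] mem_seg[of "n-1" t1 "Suc x2"] mem_seg[of "n-1" y2 "Suc x2"] by auto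
      show "C!y1 \<noteq> C!t1" "C!y1 \<noteq> C!y2" "C!t1 \<noteq> C!y2" using Cinj t1 t1' a y pos by auto
    qed
    show "nbrs E (set ?P1) v = {}"
    proof -
      have "\<forall>w\<in>set ?P1. \<not> E v w"
        unfolding ball_seg
      proof (intro allI impI)
        fix s assume s: "0 \<le> s \<and> s \<le> x2"
        then have sn: "s < n" using y by auto
        show "\<not> E v (C!s)" using Yb[rule_format, OF sn] s pos by auto
      qed
      then show ?thesis unfolding nbrs_def by auto
    qed
  qed
qed

lemma caseL3R3:
  assumes a: "2 \<le> x2" "Suc (Suc y1) \<le> y2"
  shows "has_theta V E \<or> has_turtle V E"
proof (cases "3 \<le> length P")
  case True then show ?thesis using caseL3R3long a by blast
next
  case False
  then have lP: "length P = 2" using lenP by auto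
  show ?thesis
  proof (cases "\<forall>t<n. E u (C!t) \<longrightarrow> t = 0 \<or> t = x2")
    case True
    have "has_theta V E" by (rule caseA0[OF uV uC True X0 Xx2 a(1)]) (use pos in auto)
    then show ?thesis by simp
  next
    case F1: False
    then obtain t0 where t0: "t0 < n" "E u (C!t0)" "t0 \<noteq> 0" "t0 \<noteq> x2" by blast
    show ?thesis
    proof (cases "\<forall>t<n. E v (C!t) \<longrightarrow> t = y1 \<or> t = y2")
      case True
      have "has_theta V E" by (rule caseAg[OF vV vC True Yy1 Yy2]) (use pos a in auto)
      then show ?thesis by simp
    next
      case False
      then obtain t1 where t1: "t1 < n" "E v (C!t1)" "t1 \<noteq> y1" "t1 \<noteq> y2" by blast
      show ?thesis using caseTurtle[OF a lP t0 t1] by simp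
    qed
  qed
qed

end


lemma modcase: "(a::nat) < n \<Longrightarrow> t < n \<Longrightarrow> (a + t) mod n = (if a + t < n then a + t else a + t - n)"
proof -
  assume a: "a < n" "t < n"
  show ?thesis
  proof (cases "a + t < n")
    case True then show ?thesis by simp
  next
    case False
    then have "a + t - n < n" using a by auto
    moreover have "(a + t) mod n = (a + t - n) mod n" using False by (simp add: mod_if)
    ultimately show ?thesis using False by simp
  qed
qed

context norm begin

definition "rkL = (if x2 = 0 then (1::nat) else if x2 = 1 then 2 else 3)"
definition "rkR = (if y2 = y1 then (1::nat) else if y2 = Suc y1 then 2 else 3)"

lemma norm_main:
  assumes r: "rkL \<le> rkR"
  shows "\<not> in_C V E \<or> (x2 = 0 \<and> y1 = y2 \<and> E (C!0) (C!y1))"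
proof -
  have bad: "\<not> in_C V E" if "has_theta V E \<or> has_pyramid V E \<or> has_prism V E \<or> has_turtle V E"
    using that unfolding in_C_def by blast
  consider "x2 = 0" | "x2 = 1" | "2 \<le> x2" by linarith
  then show ?thesis
  proof cases
    case 1
    consider "y2 = y1" | "y2 = Suc y1" | "Suc (Suc y1) \<le> y2" using pos by linarith
    then show ?thesis
    proof cases
      case y: 1
      show ?thesis
      proof (cases "y1 = 1 \<or> y1 = n - 1")
        case True
        have "E (C!0) (C!y1)" by (rule ECCi) (use True pos in auto)
        then show ?thesis using 1 y by simp
      next
        case False then show ?thesis using caseL1R1[OF 1] y bad by auto
      qed
    next
      case 2 then show ?thesis using caseL1R2[OF 1] bad by auto
    next
      case 3 then show ?thesis using caseL1R3[OF 1] bad by auto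
    qed
  next
    case 2
    then have "y2 \<noteq> y1" using r unfolding rkL_def rkR_def by auto
    then consider "y2 = Suc y1" | "Suc (Suc y1) \<le> y2" using pos by linarith
    then show ?thesis
    proof cases
      case 1 then show ?thesis using caseL2R2[OF 2] bad by auto
    next
      case 3: 2 then show ?thesis using caseL2R3[OF 2] bad by auto
    qed
  next
    case 3
    then have "Suc (Suc y1) \<le> y2" using r pos unfolding rkL_def rkR_def by (auto split: if_splits)
    then show ?thesis using caseL3R3[OF 3] bad by auto
  qed
qed

lemma mirror: "norm V E (rotate y1 C) (rev P) v u (y2 - y1) (n - y1) (n - y1 + x2)"
proof -
  let ?C = "rotate y1 C"
  have nth': "t < n \<Longrightarrow> ?C ! t = C ! ((y1 + t) mod n)" for t by (simp add: nth_rotate)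
  have y1n: "y1 < n" using pos by auto
  show ?thesis
  proof (unfold_locales)
    show "graph V E" by (rule G)
    show "is_hole V E ?C" by (rule hole_rotate[OF H])
    show "is_path V E (rev P)" by (rule rev_path[OF G PP])
    show "2 \<le> length (rev P)" using lenP by simp
    show "hd (rev P) = v" "last (rev P) = u" using lastP hdP Pne by (simp_all add: hd_rev last_rev)
    show "set (rev P) \<inter> set ?C = {}" using disj by simp
    show "\<forall>q\<in>set (rev P). q \<noteq> v \<longrightarrow> q \<noteq> u \<longrightarrow> (\<forall>w\<in>set ?C. \<not> E q w)" using int by auto
    show "y2 - y1 < n - y1" "n - y1 \<le> n - y1 + x2" "n - y1 + x2 < length ?C" using pos by auto
    show "\<forall>t<length ?C. E v (?C ! t) \<longrightarrow> t \<le> y2 - y1"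
    proof (intro allI impI)
      fix t assume t: "t < length ?C" and e: "E v (?C ! t)"
      then have tn: "t < n" by simp
      have "(y1 + t) mod n < n" using n4 by auto
      then have "y1 \<le> (y1 + t) mod n \<and> (y1 + t) mod n \<le> y2" using Yb e nth'[OF tn] by auto
      then show "t \<le> y2 - y1" using modcase[OF y1n tn] tn by (auto split: if_splits)
    qed
    show "E v (?C ! 0)" using Yy1 nth'[of 0] n4 y1n by simp
    show "E v (?C ! (y2 - y1))" using Yy2 nth'[of "y2 - y1"] pos by simp
    show "\<forall>t<length ?C. E u (?C ! t) \<longrightarrow> n - y1 \<le> t \<and> t \<le> n - y1 + x2"
    proof (intro allI impI)
      fix t assume t: "t < length ?C" and e: "E u (?C ! t)"
      then have tn: "t < n" by simp
      have "(y1 + t) mod n < n" using n4 by auto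
      then have "(y1 + t) mod n \<le> x2" using Xb e nth'[OF tn] by auto
      then show "n - y1 \<le> t \<and> t \<le> n - y1 + x2" using modcase[OF y1n tn] pos by (auto split: if_splits)
    qed
    have m1: "(y1 + (n - y1)) mod n = 0" using y1n by simp
    show "E u (?C ! (n - y1))" using X0 nth'[of "n - y1"] m1 pos by simp
    have m2: "(y1 + (n - y1 + x2)) mod n = x2" using y1n pos by simp
    show "E u (?C ! (n - y1 + x2))" using Xx2 nth'[of "n - y1 + x2"] m2 pos by simp
  qed
qed

lemma norm_all: "\<not> in_C V E \<or> (x2 = 0 \<and> y1 = y2 \<and> E (C!0) (C!y1))"
proof (cases "rkL \<le> rkR")
  case True then show ?thesis by (rule norm_main)
next
  case False
  interpret M: norm V E "rotate y1 C" "rev P" v u "y2 - y1" "n - y1" "n - y1 + x2" by (rule mirror)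
  have "M.rkL \<le> M.rkR" using False pos unfolding rkL_def rkR_def M.rkL_def M.rkR_def by (auto split: if_splits)
  then have "\<not> in_C V E \<or> (y2 - y1 = 0 \<and> n - y1 = n - y1 + x2 \<and> E (rotate y1 C ! 0) (rotate y1 C ! (n - y1)))"
    using M.norm_main by simp
  moreover have "rotate y1 C ! 0 = C ! y1" "rotate y1 C ! (n - y1) = C ! 0"
    using pos n4 by (simp_all add: nth_rotate)
  ultimately show ?thesis using pos sym by auto
qed

end


context hol begin

lemma nbrs_mem: "w \<in> nbrs E S x \<longleftrightarrow> w \<in> S \<and> E x w" unfolding nbrs_def by simp

lemma rot_norm:
  assumes ij: "i < n" "j < n" "i \<noteq> j"
    and NX: "nbrs E (set C) u \<subseteq> arc C i j" and NY: "nbrs E (set C) v \<subseteq> arc C j i"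
    and neX: "nbrs E (set C) u \<noteq> {}" and neY: "nbrs E (set C) v \<noteq> {}"
    and dj: "nbrs E (set C) u \<inter> nbrs E (set C) v = {}"
  shows "\<exists>r x2 y1 y2. x2 < y1 \<and> y1 \<le> y2 \<and> y2 < n \<and>
     (\<forall>t<n. E u (rotate r C ! t) \<longrightarrow> t \<le> x2) \<and> E u (rotate r C ! 0) \<and> E u (rotate r C ! x2) \<and>
     (\<forall>t<n. E v (rotate r C ! t) \<longrightarrow> y1 \<le> t \<and> t \<le> y2) \<and> E v (rotate r C ! y1) \<and> E v (rotate r C ! y2)"
proof -
  let ?C0 = "rotate i C"
  have c0: "t < n \<Longrightarrow> ?C0 ! t = C ! ((i + t) mod n)" for t by (simp add: nth_rotate)
  have dC0: "distinct ?C0" using dC by simp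
  have inj0: "s < n \<Longrightarrow> t < n \<Longrightarrow> ?C0!s = ?C0!t \<Longrightarrow> s = t" for s t
    using dC0 nth_eq_iff_index_eq by (metis length_rotate)
  have C0set: "t < n \<Longrightarrow> ?C0 ! t \<in> set C" for t by (metis length_rotate nth_mem set_rotate)
  define d where "d = (j + n - i) mod n"
  have dn: "d < n" unfolding d_def using n4 by auto
  have common: False if "w \<in> set C" "E u w" "E v w" for w
    using dj that unfolding nbrs_def by blast
  have A: "t \<le> d" if t: "t < n" "E u (?C0 ! t)" for t
  proof -
    have "?C0 ! t \<in> arc C i j" using NX C0set[OF t(1)] t(2) unfolding nbrs_def by blast
    then obtain k where k: "k \<le> (j + n - i) mod n" "?C0 ! t = C ! ((i + k) mod n)"
      unfolding arc_def by blast
    have kn: "k < n" using k(1) dn unfolding d_def by linarith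
    have "?C0 ! t = ?C0 ! k" using k(2) c0[OF kn] by simp
    then have "t = k" using inj0 t(1) kn by blast
    then show ?thesis using k(1) unfolding d_def by simp
  qed
  have idj: "(i + d) mod n = j" unfolding d_def
  proof -
    have "(i + (j + n - i) mod n) mod n = (i + (j + n - i)) mod n" by (simp add: mod_add_right_eq)
    also have "i + (j + n - i) = j + n" using ij by simp
    also have "(j + n) mod n = j" using ij by simp
    finally show "(i + (j + n - i) mod n) mod n = j" .
  qed
  have dsum: "d + (i + n - j) mod n = n" unfolding d_def
  proof (cases "i < j")
    case True
    then have "(j + n - i) mod n = j - i" "(i + n - j) mod n = i + n - j" using ij
      by (simp_all add: mod_if)
    then show "(j + n - i) mod n + (i + n - j) mod n = n" using True ij by simp
  next
    case False
    then have "j < i" using ij by simp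
    then have "(j + n - i) mod n = j + n - i" "(i + n - j) mod n = i - j" using ij
      by (simp_all add: mod_if)
    then show "(j + n - i) mod n + (i + n - j) mod n = n" using \<open>j < i\<close> ij by simp
  qed
  have B: "d \<le> t \<or> t = 0" if t: "t < n" "E v (?C0 ! t)" for t
  proof -
    have "?C0 ! t \<in> arc C j i" using NY C0set[OF t(1)] t(2) unfolding nbrs_def by blast
    then obtain k where k: "k \<le> (i + n - j) mod n" "?C0 ! t = C ! ((j + k) mod n)"
      unfolding arc_def by blast
    have dk: "d + k \<le> n" using k(1) dsum by linarith
    have m: "(d + k) mod n < n" using n4 by simp
    have "(i + (d + k) mod n) mod n = (j + k) mod n"
    proof -
      have "(i + (d + k) mod n) mod n = (i + d + k) mod n" by (simp add: mod_add_right_eq add.assoc)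
      also have "\<dots> = ((i + d) mod n + k) mod n" by (simp add: mod_add_left_eq)
      finally show ?thesis using idj by simp
    qed
    then have "?C0 ! t = ?C0 ! ((d + k) mod n)" using k(2) c0[OF m] by simp
    then have "t = (d + k) mod n" using inj0 t(1) m by blast
    then show ?thesis using dk by (cases "d + k = n") auto
  qed
  define Xp where "Xp = {t. t < n \<and> E u (?C0 ! t)}"
  have fXp: "finite Xp" unfolding Xp_def by simp
  have neXp: "Xp \<noteq> {}"
  proof -
    obtain w where w: "w \<in> set C" "E u w" using neX unfolding nbrs_def by blast
    then have "w \<in> set ?C0" by simp
    then obtain t where "t < n" "w = ?C0 ! t" by (metis in_set_conv_nth length_rotate)
    then show ?thesis using w unfolding Xp_def by blast
  qed
  define x1 where "x1 = Min Xp"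
  have x1X: "x1 \<in> Xp" unfolding x1_def using fXp neXp by simp
  have x1min: "t \<in> Xp \<Longrightarrow> x1 \<le> t" for t unfolding x1_def using fXp by simp
  have x1n: "x1 < n" "x1 \<le> d" using x1X A unfolding Xp_def by auto
  let ?C1 = "rotate x1 ?C0"
  have c1: "s < n \<Longrightarrow> ?C1 ! s = ?C0 ! ((x1 + s) mod n)" for s by (simp add: nth_rotate)
  have m1: "(x1 + s) mod n < n" for s using n4 by simp
  have A': "s \<le> d - x1" if s: "s < n" "E u (?C1 ! s)" for s
  proof -
    let ?t = "(x1 + s) mod n"
    have "?t \<in> Xp" using s c1 m1 unfolding Xp_def by simp
    then have "x1 \<le> ?t" "?t \<le> d" using x1min A m1 s c1 by auto
    then show ?thesis using modcase[OF x1n(1) s(1)] s(1) by (auto split: if_splits)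
  qed
  have B': "d - x1 \<le> s" if s: "s < n" "E v (?C1 ! s)" for s
  proof -
    let ?t = "(x1 + s) mod n"
    have "d \<le> ?t \<or> ?t = 0" using B m1 s c1 by auto
    moreover have "?t = 0 \<Longrightarrow> x1 + s < n \<Longrightarrow> False"
    proof -
      assume t0: "?t = 0" and lt: "x1 + s < n"
      then have "x1 = 0" by simp
      then have "E u (?C0 ! 0)" using x1X unfolding Xp_def by simp
      moreover have "E v (?C0 ! 0)" using s c1 t0 by simp
      ultimately show False using common C0set n4 by (metis Cne length_greater_0_conv)
    qed
    ultimately show ?thesis using modcase[OF x1n(1) s(1)] s(1) dn by (auto split: if_splits)
  qed
  have u0: "E u (?C1 ! 0)" using c1[of 0] x1X n4 unfolding Xp_def by simp
  define XC where "XC = {s. s < n \<and> E u (?C1 ! s)}"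
  define YC where "YC = {s. s < n \<and> E v (?C1 ! s)}"
  have fin: "finite XC" "finite YC" unfolding XC_def YC_def by simp_all
  have C1set: "set ?C1 = set C" by simp
  have "0 \<in> XC" using u0 n4 unfolding XC_def by simp
  then have neXC: "XC \<noteq> {}" by blast
  have neYC: "YC \<noteq> {}"
  proof -
    obtain w where w: "w \<in> set C" "E v w" using neY unfolding nbrs_def by blast
    then have "w \<in> set ?C1" by simp
    then obtain t where "t < n" "w = ?C1 ! t" by (metis in_set_conv_nth length_rotate)
    then show ?thesis using w unfolding YC_def by blast
  qed
  define x2 where "x2 = Max XC"
  define y1 where "y1 = Min YC"
  define y2 where "y2 = Max YC"
  have x2X: "x2 \<in> XC" unfolding x2_def using fin neXC by simp
  have y1Y: "y1 \<in> YC" unfolding y1_def using fin neYC by simp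
  have y2Y: "y2 \<in> YC" unfolding y2_def using fin neYC by simp
  have x2max: "s \<in> XC \<Longrightarrow> s \<le> x2" for s unfolding x2_def using fin by simp
  have y1min: "s \<in> YC \<Longrightarrow> y1 \<le> s" for s unfolding y1_def using fin by simp
  have y2max: "s \<in> YC \<Longrightarrow> s \<le> y2" for s unfolding y2_def using fin by simp
  have "x2 \<le> d - x1" using A' x2X unfolding XC_def by auto
  moreover have "d - x1 \<le> y1" using B' y1Y unfolding YC_def by auto
  moreover have "x2 \<noteq> y1"
  proof
    assume "x2 = y1"
    then have "E u (?C1 ! x2)" "E v (?C1 ! x2)" "x2 < n" using x2X y1Y unfolding XC_def YC_def by auto
    then show False using common by (metis C1set length_rotate nth_mem)
  qed
  ultimately have xy: "x2 < y1" by linarith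
  have rr: "?C1 = rotate (x1 + i) C" by (simp add: rotate_rotate)
  show ?thesis
  proof (rule exI[of _ "x1 + i"], rule exI[of _ x2], rule exI[of _ y1], rule exI[of _ y2], unfold rr[symmetric], intro conjI)
    show "x2 < y1" by (rule xy)
    show "y1 \<le> y2" using y2max y1Y by simp
    show "y2 < n" using y2Y unfolding YC_def by simp
    show "\<forall>t<n. E u (?C1 ! t) \<longrightarrow> t \<le> x2" using x2max unfolding XC_def by simp
    show "E u (?C1 ! 0)" by (rule u0)
    show "E u (?C1 ! x2)" using x2X unfolding XC_def by simp
    show "\<forall>t<n. E v (?C1 ! t) \<longrightarrow> y1 \<le> t \<and> t \<le> y2" using y1min y2max unfolding YC_def by simp
    show "E v (?C1 ! y1)" "E v (?C1 ! y2)" using y1Y y2Y unfolding YC_def by simp_all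
  qed
qed

end


theorem lemma2p9:
  fixes V :: "'a set" and E :: "'a \<Rightarrow> 'a \<Rightarrow> bool" and H P :: "'a list" and u v :: 'a
  assumes "in_C V E"
    and "is_hole V E H"
    and "is_path V E P" and "length P \<ge> 2" and "hd P = u" and "last P = v"
    and "set P \<inter> set H = {}"
    and "nbrs E (set H) u \<noteq> {}" and "nbrs E (set H) v \<noteq> {}"
    and "nested E H u v"
    and "\<forall>i. 0 < i \<and> i < length P - 1 \<longrightarrow> nbrs E (set H) (P ! i) = {}"
  shows "(nbrs E (set H) u \<inter> nbrs E (set H) v \<noteq> {} \<or>
          (pendant E H u \<and> pendant E H v \<and>
           (\<exists>a b. nbrs E (set H) u = {a} \<and> nbrs E (set H) v = {b} \<and> E a b)))
       \<and> (strictly_nested E H u v \<longrightarrow>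
          pendant E H u \<and> pendant E H v \<and>
           (\<exists>a b. nbrs E (set H) u = {a} \<and> nbrs E (set H) v = {b} \<and> E a b))"
proof -
  note inC = assms(1) and HH = assms(2) and PP = assms(3) and lenP = assms(4) and hdP = assms(5)
    and lastP = assms(6) and disj = assms(7) and neX = assms(8) and neY = assms(9) and nest = assms(10)
    and intr = assms(11)
  have G: "graph V E" using inC unfolding in_C_def by blast
  interpret hol V E H by unfold_locales (rule G, rule HH)
  have Pne: "P \<noteq> []" using lenP by auto
  have key: "pendant E H u \<and> pendant E H v \<and>
      (\<exists>a b. nbrs E (set H) u = {a} \<and> nbrs E (set H) v = {b} \<and> E a b)"
    if dj: "nbrs E (set H) u \<inter> nbrs E (set H) v = {}"
  proof -
    obtain i j where ij: "i < n" "j < n" "i \<noteq> j" "nbrs E (set H) u \<subseteq> arc H i j"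
      "nbrs E (set H) v \<subseteq> arc H j i" and uH: "u \<notin> set H" and vH: "v \<notin> set H"
      using nest unfolding nested_def by blast
    obtain r x2 y1 y2 where R: "x2 < y1" "y1 \<le> y2" "y2 < n"
      "\<forall>t<n. E u (rotate r H ! t) \<longrightarrow> t \<le> x2" "E u (rotate r H ! 0)" "E u (rotate r H ! x2)"
      "\<forall>t<n. E v (rotate r H ! t) \<longrightarrow> y1 \<le> t \<and> t \<le> y2" "E v (rotate r H ! y1)" "E v (rotate r H ! y2)"
      using rot_norm[OF ij neX neY dj] by blast
    let ?C = "rotate r H"
    have int: "\<forall>q\<in>set P. q \<noteq> u \<longrightarrow> q \<noteq> v \<longrightarrow> (\<forall>w\<in>set ?C. \<not> E q w)"
    proof (intro ballI impI)
      fix q w assume q: "q \<in> set P" "q \<noteq> u" "q \<noteq> v" and w: "w \<in> set ?C"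
      obtain k where k: "k < length P" "q = P ! k" using q(1) by (metis in_set_conv_nth)
      have "k \<noteq> 0"
      proof
        assume "k = 0" then have "q = hd P" using k Pne by (simp add: hd_conv_nth)
        then show False using q hdP by simp
      qed
      moreover have "k \<noteq> length P - 1" using k q lastP Pne by (auto simp: last_conv_nth)
      ultimately have "nbrs E (set H) (P ! k) = {}" using intr k by auto
      then show "\<not> E q w" using w k unfolding nbrs_def by auto
    qed
    interpret N: norm V E ?C P u v x2 y1 y2
    proof (unfold_locales)
      show "graph V E" by (rule G)
      show "is_hole V E ?C" by (rule hole_rotate[OF HH])
    qed (use PP lenP hdP lastP disj int R in auto)
    have res: "x2 = 0 \<and> y1 = y2 \<and> E (?C ! 0) (?C ! y1)" using N.norm_all inC by blast
    have C0: "?C ! 0 \<in> set H" "?C ! y1 \<in> set H" using n4 R by (metis length_rotate nth_mem set_rotate le_less_trans zero_less_iff_neq_zero Cne length_greater_0_conv)+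
    have Xs: "nbrs E (set H) u = {?C ! 0}"
    proof
      show "nbrs E (set H) u \<subseteq> {?C ! 0}"
      proof
        fix w assume "w \<in> nbrs E (set H) u"
        then have w: "w \<in> set ?C" "E u w" unfolding nbrs_def by auto
        then obtain t where t: "t < n" "w = ?C ! t" by (metis in_set_conv_nth length_rotate)
        then have "t \<le> x2" using R w by auto
        then show "w \<in> {?C ! 0}" using t res by simp
      qed
      show "{?C ! 0} \<subseteq> nbrs E (set H) u" using C0 R unfolding nbrs_def by auto
    qed
    have Ys: "nbrs E (set H) v = {?C ! y1}"
    proof
      show "nbrs E (set H) v \<subseteq> {?C ! y1}"
      proof
        fix w assume "w \<in> nbrs E (set H) v"
        then have w: "w \<in> set ?C" "E v w" unfolding nbrs_def by auto
        then obtain t where t: "t < n" "w = ?C ! t" by (metis in_set_conv_nth length_rotate)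
        then have "y1 \<le> t \<and> t \<le> y2" using R w by auto
        then have "t = y1" using res by linarith
        then show "w \<in> {?C ! y1}" using t by simp
      qed
      show "{?C ! y1} \<subseteq> nbrs E (set H) v" using C0 R unfolding nbrs_def by auto
    qed
    show ?thesis unfolding pendant_def using Xs Ys uH vH res by auto
  qed
  show ?thesis
  proof (cases "nbrs E (set H) u \<inter> nbrs E (set H) v = {}")
    case True then show ?thesis using key by blast
  next
    case False then show ?thesis unfolding strictly_nested_def by blast
  qed
qed


end
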